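(* Let $s\in\mathbb N$. There exist positive constants $A_s,B_s$ depending on $s$ such that for every $N\ge1$ and every $r\ge2$, if $\boldsymbol k_1,\dots,\boldsymbol k_r$ are sampled independently from the uniform distribution on $Q_N$, then $$\Pr\big(\oplus_{i=1}^r\boldsymbol k_i\in Q_N\big)\le A_s^rN^{r/4}r^{-B_s\sqrt N}.$$
   Context: For $k\in\mathbb N_0$, $k=\sum_{\ell\ge1}a_\ell2^{\ell-1}$ with $a_\ell\in\{0,1\}$, let $\kappa=\{\ell:a_\ell=1\}$. For $\boldsymbol k\in\mathbb N_0^s$ with digit sets $\kappa_1,\dots,\kappa_s$, $\|\boldsymbol\kappa\|_1=\sum_j\sum_{\ell\in\kappa_j}\ell$; $Q_N=\{\boldsymbol k\in\mathbb N_0^s\setminus\{\boldsymbol0\}:\|\boldsymbol\kappa\|_1\le N\}$. $\boldsymbol k_1\oplus\boldsymbol k_2$ is the componentwise bitwise XOR (each component's digit set is the symmetric difference of the corresponding digit sets), and $\oplus_{i=1}^r\boldsymbol k_i$ is the iterated sum. *)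

theory Defs
  imports Complex_Main "HOL-Library.FuncSet"
begin

text \<open>Digit set of k: kappa = {l >= 1. a_l = 1} where k = sum a_l 2^(l-1).\<close>
definition digit_set :: "nat \<Rightarrow> nat set" where
  "digit_set k = {l. 1 \<le> l \<and> bit k (l - 1)}"

text \<open>Vectors in N_0^s are lists of length s.  ||kappa||_1.\<close>
definition dnorm :: "nat list \<Rightarrow> nat" where
  "dnorm ks = (\<Sum>j<length ks. \<Sum>l\<in>digit_set (ks ! j). l)"

definition QN :: "nat \<Rightarrow> nat \<Rightarrow> nat list set" where
  "QN s N = {ks. length ks = s \<and> ks \<noteq> replicate s 0 \<and> dnorm ks \<le> N}"

text \<open>Componentwise bitwise XOR (digit sets: symmetric difference).\<close>
definition vxor :: "nat list \<Rightarrow> nat list \<Rightarrow> nat list" where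
  "vxor xs ys = map2 (\<lambda>a b. Bit_Operations.xor a b) xs ys"

definition xsum :: "nat \<Rightarrow> (nat \<Rightarrow> nat list) \<Rightarrow> nat \<Rightarrow> nat list" where
  "xsum s ks r = fold (\<lambda>i acc. vxor acc (ks i)) [0..<r] (replicate s 0)"

definition xor_prob :: "nat \<Rightarrow> nat \<Rightarrow> nat \<Rightarrow> real" where
  "xor_prob s N r =
     real (card {ks \<in> PiE {..<r} (\<lambda>_. QN s N). xsum s ks r \<in> QN s N})
     / real (card (QN s N)) ^ r"

end

theory Submission
  imports Defs "HOL-Real_Asymp.Real_Asymp"
begin


lemma bit_nat_lt: "bit (k::nat) i \<Longrightarrow> i < k"
proof (rule ccontr)
  assume b: "bit k i" and "\<not> i < k"
  then have "(2::nat)^k \<le> 2^i" by (simp add: power_increasing)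
  then have "k < 2^i" using less_exp[of k] by linarith
  then have "k div 2^i = 0" by simp
  with b show False by (simp add: bit_iff_odd)
qed

lemma digit_set_sub: "digit_set k \<subseteq> {1..k}"
proof
  fix l assume "l \<in> digit_set k"
  then have "1 \<le> l" "bit k (l-1)" unfolding digit_set_def by auto
  then show "l \<in> {1..k}" using bit_nat_lt[of k "l-1"] by auto
qed

lemma finite_digit_set[simp]: "finite (digit_set k)"
  using digit_set_sub finite_subset by blast

lemma digit_set_pos: "l \<in> digit_set k \<Longrightarrow> 1 \<le> l"
  unfolding digit_set_def by auto

lemma digit_set_xor: "digit_set (xor a b) = (digit_set a - digit_set b) \<union> (digit_set b - digit_set a)"
  unfolding digit_set_def by (auto simp: bit_xor_iff)

lemma digit_set_inj: "digit_set a = digit_set b \<Longrightarrow> a = b"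
proof -
  assume h: "digit_set a = digit_set b"
  have "bit a n = bit b n" for n
  proof -
    have "Suc n \<in> digit_set a \<longleftrightarrow> Suc n \<in> digit_set b" using h by simp
    then show "bit a n = bit b n" unfolding digit_set_def by simp
  qed
  then show "a = b" by (simp add: bit_eq_iff)
qed

lemma digit_set_0[simp]: "digit_set 0 = {}"
  unfolding digit_set_def by simp

lemma digit_set_empty_iff: "digit_set a = {} \<longleftrightarrow> a = 0"
  using digit_set_inj[of a 0] by auto

lemma digit_set_set_bit: "1 \<le> l \<Longrightarrow> digit_set (set_bit (l-1) k) = insert l (digit_set k)"
  unfolding digit_set_def by (auto simp: bit_set_bit_iff)

lemma digit_set_surj: "finite S \<Longrightarrow> (\<forall>l\<in>S. 1 \<le> l) \<Longrightarrow> \<exists>k. digit_set k = S"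
proof (induction S rule: finite_induct)
  case empty then show ?case by (intro exI[of _ 0]) simp
next
  case (insert l S)
  then obtain k where "digit_set k = S" by auto
  then show ?case using insert.prems digit_set_set_bit[of l k] by auto
qed

definition symd :: "'a set \<Rightarrow> 'a set \<Rightarrow> 'a set" where
  "symd A B = (A - B) \<union> (B - A)"

definition enc :: "nat list \<Rightarrow> (nat \<times> nat) set" where
  "enc v = Sigma {..<length v} (\<lambda>j. digit_set (v!j))"

definition W :: "(nat \<times> nat) set \<Rightarrow> nat" where
  "W D = (\<Sum>u\<in>D. snd u)"

lemma finite_enc[simp]: "finite (enc v)"
  unfolding enc_def by auto

lemma dnorm_enc: "dnorm v = W (enc v)"
  unfolding dnorm_def W_def enc_def by (simp add: sum.Sigma split_beta)

lemma length_vxor[simp]: "length (vxor v w) = min (length v) (length w)"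
  unfolding vxor_def by simp

lemma nth_vxor: "j < length v \<Longrightarrow> j < length w \<Longrightarrow> vxor v w ! j = xor (v!j) (w!j)"
  unfolding vxor_def by simp

lemma enc_vxor: "length v = length w \<Longrightarrow> enc (vxor v w) = symd (enc v) (enc w)"
  unfolding enc_def symd_def by (auto simp: nth_vxor digit_set_xor)

lemma enc_empty_iff: "enc v = {} \<longleftrightarrow> v = replicate (length v) 0"
proof
  assume h: "enc v = {}"
  show "v = replicate (length v) 0"
  proof (rule nth_equalityI)
    fix j assume "j < length v"
    with h have "digit_set (v!j) = {}" unfolding enc_def by auto
    then show "v ! j = replicate (length v) 0 ! j" using \<open>j < length v\<close> by (simp add: digit_set_empty_iff)
  qed simp
next
  assume "v = replicate (length v) 0"
  then have "\<And>j. j < length v \<Longrightarrow> v!j = 0" by (metis nth_replicate)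
  then show "enc v = {}" unfolding enc_def by auto
qed

lemma enc_inj: "length v = length w \<Longrightarrow> enc v = enc w \<Longrightarrow> v = w"
proof (rule nth_equalityI)
  fix j assume l: "length v = length w" and e: "enc v = enc w" and j: "j < length v"
  have "digit_set (v!j) = digit_set (w!j)"
  proof -
    have "\<And>l. l \<in> digit_set (v!j) \<longleftrightarrow> (j,l) \<in> enc v" using j unfolding enc_def by auto
    moreover have "\<And>l. l \<in> digit_set (w!j) \<longleftrightarrow> (j,l) \<in> enc w" using j l unfolding enc_def by auto
    ultimately show ?thesis using e by auto
  qed
  then show "v!j = w!j" by (rule digit_set_inj)
qed

lemma enc_surj:
  assumes "finite D" "D \<subseteq> {..<s} \<times> {1..}"
  shows "\<exists>v. length v = s \<and> enc v = D"
proof -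
  have "\<forall>j. \<exists>k. digit_set k = {l. (j,l) \<in> D}"
  proof
    fix j
    have "finite {l. (j,l) \<in> D}"
      using assms(1) by (rule finite_subset[rotated, OF finite_imageI[of D snd]]) force
    moreover have "\<forall>l\<in>{l. (j,l) \<in> D}. 1 \<le> l" using assms(2) by auto
    ultimately show "\<exists>k. digit_set k = {l. (j,l) \<in> D}" using digit_set_surj by blast
  qed
  then obtain f where f: "\<And>j. digit_set (f j) = {l. (j,l) \<in> D}" by metis
  define v where "v = map f [0..<s]"
  have "enc v = D"
    unfolding enc_def v_def using assms(2) by (auto simp: f)
  then show ?thesis unfolding v_def by (intro exI[of _ "map f [0..<s]"]) auto
qed


definition U :: "nat \<Rightarrow> nat \<Rightarrow> (nat \<times> nat) set" where
  "U s N = {..<s} \<times> {1..N}"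

definition FQ :: "nat \<Rightarrow> nat \<Rightarrow> (nat \<times> nat) set set" where
  "FQ s N = {D. D \<subseteq> U s N \<and> D \<noteq> {} \<and> W D \<le> N}"

definition OpS :: "nat \<Rightarrow> nat \<Rightarrow> ((nat \<times> nat) set \<Rightarrow> real) \<Rightarrow> (nat \<times> nat) set \<Rightarrow> real" where
  "OpS s N \<phi> D = (\<Sum>E\<in>FQ s N. \<phi> (symd D E))"

definition OpL :: "nat \<Rightarrow> nat \<Rightarrow> (nat list \<Rightarrow> real) \<Rightarrow> nat list \<Rightarrow> real" where
  "OpL s N \<phi> Z = (\<Sum>k\<in>QN s N. \<phi> (vxor Z k))"

definition xsumY :: "nat list \<Rightarrow> (nat \<Rightarrow> nat list) \<Rightarrow> nat \<Rightarrow> nat list" where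
  "xsumY Y ks r = fold (\<lambda>i acc. vxor acc (ks i)) [0..<r] Y"

lemma finite_U[simp]: "finite (U s N)" unfolding U_def by auto

lemma finite_FQ[simp]: "finite (FQ s N)"
  unfolding FQ_def by (rule finite_subset[of _ "Pow (U s N)"]) auto

lemma W_le_member: "finite D \<Longrightarrow> u \<in> D \<Longrightarrow> snd u \<le> W D"
  unfolding W_def by (rule member_le_sum) auto

lemma QN_iff: "v \<in> QN s N \<longleftrightarrow> length v = s \<and> enc v \<in> FQ s N"
proof
  assume v: "v \<in> QN s N"
  then have l: "length v = s" and nz: "v \<noteq> replicate s 0" and d: "dnorm v \<le> N"
    unfolding QN_def by auto
  have "enc v \<subseteq> U s N"
  proof
    fix u assume u: "u \<in> enc v"
    then obtain j l where [simp]: "u = (j,l)" and j: "j < s" and ld: "l \<in> digit_set (v!j)"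
      unfolding enc_def using l by auto
    have "l \<le> W (enc v)" using W_le_member[OF finite_enc u] by simp
    then have "l \<le> N" using d dnorm_enc by simp
    then show "u \<in> U s N" unfolding U_def using j digit_set_pos[OF ld] by auto
  qed
  moreover have "enc v \<noteq> {}" using enc_empty_iff l nz by auto
  ultimately show "length v = s \<and> enc v \<in> FQ s N" unfolding FQ_def using l d dnorm_enc by auto
next
  assume h: "length v = s \<and> enc v \<in> FQ s N"
  then show "v \<in> QN s N" unfolding QN_def FQ_def using enc_empty_iff[of v] dnorm_enc[of v] by auto
qed

lemma bij_enc: "bij_betw enc (QN s N) (FQ s N)"
proof (rule bij_betw_imageI)
  show "inj_on enc (QN s N)" by (rule inj_onI) (auto simp: QN_iff intro: enc_inj)
  show "enc ` QN s N = FQ s N"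
  proof
    show "enc ` QN s N \<subseteq> FQ s N" using QN_iff by auto
    show "FQ s N \<subseteq> enc ` QN s N"
    proof
      fix D assume D: "D \<in> FQ s N"
      then have DU: "D \<subseteq> U s N" unfolding FQ_def by auto
      then have "finite D" using finite_U finite_subset by blast
      moreover have "D \<subseteq> {..<s} \<times> {1..}" using DU unfolding U_def by auto
      ultimately obtain v where "length v = s" "enc v = D" using enc_surj by blast
      then show "D \<in> enc ` QN s N" using D QN_iff by (metis imageI)
    qed
  qed
qed

lemma card_QN: "card (QN s N) = card (FQ s N)"
  using bij_betw_same_card[OF bij_enc] .

lemma finite_QN: "finite (QN s N)"
  using bij_betw_finite[OF bij_enc] by simp

lemma xsumY_cong: "(\<And>i. i < r \<Longrightarrow> ks i = ks' i) \<Longrightarrow> xsumY Y ks r = xsumY Y ks' r"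
  unfolding xsumY_def by (rule fold_cong) auto

lemma xsumY_Suc: "xsumY Y ks (Suc r) = vxor (xsumY Y ks r) (ks r)"
  unfolding xsumY_def by simp


lemma sum_PiE_Suc:
  fixes F :: "(nat \<Rightarrow> 'b) \<Rightarrow> real"
  assumes fin: "finite A"
  shows "(\<Sum>f\<in>PiE {..<Suc r} (\<lambda>_. A). F f) = (\<Sum>g\<in>PiE {..<r} (\<lambda>_. A). \<Sum>a\<in>A. F (g(r:=a)))"
proof -
  have eq: "PiE {..<Suc r} (\<lambda>_. A) = (\<lambda>(y, g). g(r := y)) ` (A \<times> PiE {..<r} (\<lambda>_. A))"
    unfolding lessThan_Suc by (rule PiE_insert_eq)
  have inj: "inj_on (\<lambda>(y, g). g(r := y)) (A \<times> PiE {..<r} (\<lambda>_. A))"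
  proof (rule inj_onI)
    fix p q assume p: "p \<in> A \<times> PiE {..<r} (\<lambda>_. A)" and q: "q \<in> A \<times> PiE {..<r} (\<lambda>_. A)"
      and e0: "(\<lambda>(y, g). g(r := y)) p = (\<lambda>(y, g). g(r := y)) q"
    obtain y g where [simp]: "p = (y,g)" by (cases p)
    obtain y' g' where [simp]: "q = (y',g')" by (cases q)
    have g: "g \<in> PiE {..<r} (\<lambda>_. A)" and g': "g' \<in> PiE {..<r} (\<lambda>_. A)" using p q by auto
    have e: "g(r := y) = g'(r := y')" using e0 by simp
    have "y = y'" using fun_cong[OF e, of r] by simp
    moreover have "g = g'"
    proof
      fix i show "g i = g' i"
      proof (cases "i = r")
        case True
        have "g r = undefined" using g by (intro PiE_arb[OF g]) simp
        moreover have "g' r = undefined" using g' by (intro PiE_arb[OF g']) simp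
        ultimately show ?thesis using True by simp
      next
        case False then show ?thesis using fun_cong[OF e, of i] by simp
      qed
    qed
    ultimately show "p = q" by simp
  qed
  have "(\<Sum>f\<in>PiE {..<Suc r} (\<lambda>_. A). F f) = (\<Sum>p\<in>A \<times> PiE {..<r} (\<lambda>_. A). F ((\<lambda>(y, g). g(r := y)) p))"
    unfolding eq by (rule sum.reindex[OF inj, unfolded comp_def])
  also have "\<dots> = (\<Sum>(y,g)\<in>A \<times> PiE {..<r} (\<lambda>_. A). F (g(r:=y)))"
    by (rule sum.cong) auto
  also have "\<dots> = (\<Sum>y\<in>A. \<Sum>g\<in>PiE {..<r} (\<lambda>_. A). F (g(r:=y)))"
    by (rule sum.cartesian_product[symmetric])
  also have "\<dots> = (\<Sum>g\<in>PiE {..<r} (\<lambda>_. A). \<Sum>a\<in>A. F (g(r:=a)))"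
    by (rule sum.swap)
  finally show ?thesis .
qed
lemma sum_PiE_OpL:
  "(\<Sum>ks\<in>PiE {..<r} (\<lambda>_. QN s N). \<phi> (xsumY Y ks r)) = (OpL s N ^^ r) \<phi> Y"
proof (induction r arbitrary: \<phi>)
  case 0
  then show ?case by (simp add: xsumY_def)
next
  case (Suc r)
  have "(\<Sum>ks\<in>PiE {..<Suc r} (\<lambda>_. QN s N). \<phi> (xsumY Y ks (Suc r)))
      = (\<Sum>g\<in>PiE {..<r} (\<lambda>_. QN s N). \<Sum>a\<in>QN s N. \<phi> (xsumY Y (g(r:=a)) (Suc r)))"
    by (rule sum_PiE_Suc[OF finite_QN])
  also have "\<dots> = (\<Sum>g\<in>PiE {..<r} (\<lambda>_. QN s N). OpL s N \<phi> (xsumY Y g r))"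
  proof (rule sum.cong[OF refl])
    fix g assume "g \<in> PiE {..<r} (\<lambda>_. QN s N)"
    have "\<And>a. xsumY Y (g(r:=a)) (Suc r) = vxor (xsumY Y g r) a"
      unfolding xsumY_Suc by (simp add: xsumY_cong[of r "g(r:=_)" g])
    then show "(\<Sum>a\<in>QN s N. \<phi> (xsumY Y (g(r:=a)) (Suc r))) = OpL s N \<phi> (xsumY Y g r)"
      unfolding OpL_def by simp
  qed
  also have "\<dots> = (OpL s N ^^ r) (OpL s N \<phi>) Y" by (rule Suc.IH)
  also have "\<dots> = (OpL s N ^^ Suc r) \<phi> Y" by (simp only: funpow_Suc_right comp_def)
  finally show ?case .
qed

lemma OpL_transfer:
  assumes "length Z = s"
  shows "(OpL s N ^^ r) (\<lambda>v. \<psi> (enc v)) Z = (OpS s N ^^ r) \<psi> (enc Z)"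
  using assms
proof (induction r arbitrary: Z)
  case 0 then show ?case by simp
next
  case (Suc r)
  have "(OpL s N ^^ Suc r) (\<lambda>v. \<psi> (enc v)) Z = (\<Sum>k\<in>QN s N. (OpL s N ^^ r) (\<lambda>v. \<psi> (enc v)) (vxor Z k))"
    by (simp add: OpL_def)
  also have "\<dots> = (\<Sum>k\<in>QN s N. (OpS s N ^^ r) \<psi> (symd (enc Z) (enc k)))"
  proof (rule sum.cong[OF refl])
    fix k assume k: "k \<in> QN s N"
    then have lk: "length k = s" using QN_iff by auto
    then have "length (vxor Z k) = s" using Suc.prems by simp
    then have "(OpL s N ^^ r) (\<lambda>v. \<psi> (enc v)) (vxor Z k) = (OpS s N ^^ r) \<psi> (enc (vxor Z k))"
      by (rule Suc.IH)
    also have "enc (vxor Z k) = symd (enc Z) (enc k)" using enc_vxor lk Suc.prems by simp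
    finally show "(OpL s N ^^ r) (\<lambda>v. \<psi> (enc v)) (vxor Z k) = (OpS s N ^^ r) \<psi> (symd (enc Z) (enc k))" .
  qed
  also have "\<dots> = (\<Sum>E\<in>FQ s N. (OpS s N ^^ r) \<psi> (symd (enc Z) E))"
    using sum.reindex_bij_betw[OF bij_enc, of "\<lambda>E. (OpS s N ^^ r) \<psi> (symd (enc Z) E)"] by simp
  also have "\<dots> = (OpS s N ^^ Suc r) \<psi> (enc Z)" by (simp add: OpS_def)
  finally show ?case .
qed

lemma OpL_cong: "(\<And>v. length v = s \<Longrightarrow> \<phi> v = \<phi>' v) \<Longrightarrow> length Z = s \<Longrightarrow> (OpL s N ^^ r) \<phi> Z = (OpL s N ^^ r) \<phi>' Z"
proof (induction r arbitrary: Z \<phi> \<phi>')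
  case 0 then show ?case by simp
next
  case (Suc r)
  have "OpL s N \<phi> v = OpL s N \<phi>' v" if v: "length v = s" for v :: "nat list"
    unfolding OpL_def
  proof (rule sum.cong[OF refl])
    fix k assume "k \<in> QN s N"
    then have "length k = s" unfolding QN_def by simp
    then show "\<phi> (vxor v k) = \<phi>' (vxor v k)" using v Suc.prems(1) by simp
  qed
  then show ?case unfolding funpow_Suc_right comp_def using Suc.IH[of "OpL s N \<phi>" "OpL s N \<phi>'" Z] Suc.prems(2)
    by blast
qed

lemma xor_prob_OpS:
  "xor_prob s N r = (OpS s N ^^ r) (\<lambda>D. if D \<in> FQ s N then 1 else 0) {} / real (card (FQ s N)) ^ r"
proof -
  have fin: "finite (PiE {..<r} (\<lambda>_. QN s N))" using finite_QN by (simp add: finite_PiE)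
  have xs: "xsum s ks r = xsumY (replicate s 0) ks r" for ks unfolding xsum_def xsumY_def by simp
  have "real (card {ks \<in> PiE {..<r} (\<lambda>_. QN s N). xsum s ks r \<in> QN s N})
      = (\<Sum>ks\<in>{ks \<in> PiE {..<r} (\<lambda>_. QN s N). xsum s ks r \<in> QN s N}. 1)"
    by simp
  also have "\<dots> = (\<Sum>ks\<in>PiE {..<r} (\<lambda>_. QN s N). if xsum s ks r \<in> QN s N then 1 else 0)"
    by (rule sum.inter_filter[OF fin])
  also have "\<dots> = (\<Sum>ks\<in>PiE {..<r} (\<lambda>_. QN s N). (\<lambda>v. if v \<in> QN s N then 1 else 0) (xsumY (replicate s 0) ks r))"
    unfolding xs by (rule refl)
  also have "\<dots> = (OpL s N ^^ r) (\<lambda>v. if v \<in> QN s N then 1 else 0) (replicate s 0)"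
    by (rule sum_PiE_OpL)
  also have "\<dots> = (OpL s N ^^ r) (\<lambda>v. (\<lambda>D. if D \<in> FQ s N then 1 else (0::real)) (enc v)) (replicate s 0)"
    by (rule OpL_cong, simp only: QN_iff, simp, simp)
  also have "\<dots> = (OpS s N ^^ r) (\<lambda>D. if D \<in> FQ s N then 1 else 0) (enc (replicate s 0))"
    by (rule OpL_transfer) simp
  also have "enc (replicate s 0) = {}" by (simp only: enc_empty_iff length_replicate)
  finally show ?thesis unfolding xor_prob_def card_QN by (rule arg_cong[where f="\<lambda>t. t / _"])
qed


definition Fam :: "nat \<Rightarrow> nat \<Rightarrow> (nat \<times> nat) set set" where
  "Fam s N = {D. D \<subseteq> U s N \<and> W D \<le> N}"

definition OpP :: "nat \<Rightarrow> nat \<Rightarrow> real \<Rightarrow> ((nat \<times> nat) set \<Rightarrow> real) \<Rightarrow> (nat \<times> nat) set \<Rightarrow> real" where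
  "OpP s N x \<phi> D = (\<Sum>E\<in>Pow (U s N). x ^ W E * \<phi> (symd D E))"

fun cc :: "real \<Rightarrow> real \<Rightarrow> nat \<Rightarrow> nat \<Rightarrow> bool \<Rightarrow> real" where
  "cc x y 0 l b = (if b then y ^ l else 1)"
| "cc x y (Suc k) l b = cc x y k l b + x ^ l * cc x y k l (\<not> b)"

lemma symd_sub: "D \<subseteq> A \<Longrightarrow> E \<subseteq> A \<Longrightarrow> symd D E \<subseteq> A"
  unfolding symd_def by auto

lemma FQ_sub: "E \<in> FQ s N \<Longrightarrow> E \<subseteq> U s N"
  unfolding FQ_def by auto

lemma OpS_bound:
  assumes "\<And>D. D \<subseteq> U s N \<Longrightarrow> 0 \<le> \<phi> D \<and> \<phi> D \<le> c"
  shows "D \<subseteq> U s N \<Longrightarrow> 0 \<le> (OpS s N ^^ n) \<phi> D \<and> (OpS s N ^^ n) \<phi> D \<le> real (card (FQ s N)) ^ n * c"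
proof (induction n arbitrary: D)
  case 0 then show ?case using assms by simp
next
  case (Suc n)
  have h: "\<And>E. E \<in> FQ s N \<Longrightarrow> 0 \<le> (OpS s N ^^ n) \<phi> (symd D E) \<and> (OpS s N ^^ n) \<phi> (symd D E) \<le> real (card (FQ s N)) ^ n * c"
  proof -
    fix E assume "E \<in> FQ s N"
    then have "symd D E \<subseteq> U s N" using symd_sub[OF Suc.prems FQ_sub] by simp
    then show "0 \<le> (OpS s N ^^ n) \<phi> (symd D E) \<and> (OpS s N ^^ n) \<phi> (symd D E) \<le> real (card (FQ s N)) ^ n * c"
      by (rule Suc.IH)
  qed
  have "(OpS s N ^^ Suc n) \<phi> D = (\<Sum>E\<in>FQ s N. (OpS s N ^^ n) \<phi> (symd D E))" by (simp add: OpS_def)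
  moreover have "(\<Sum>E\<in>FQ s N. (OpS s N ^^ n) \<phi> (symd D E)) \<le> (\<Sum>E\<in>FQ s N. real (card (FQ s N)) ^ n * c)"
    using h by (intro sum_mono) auto
  moreover have "0 \<le> (\<Sum>E\<in>FQ s N. (OpS s N ^^ n) \<phi> (symd D E))" using h by (intro sum_nonneg) auto
  ultimately show ?case by (simp add: mult.assoc)
qed

lemma prod_symd:
  assumes "E \<subseteq> A" "finite A"
  shows "(\<Prod>u\<in>A. c u (u \<in> symd D E)) = (\<Prod>u\<in>E. c u (u \<notin> D)) * (\<Prod>u\<in>A - E. c u (u \<in> D))"
proof -
  have "(\<Prod>u\<in>A. c u (u \<in> symd D E)) = (\<Prod>u\<in>A - E. c u (u \<in> symd D E)) * (\<Prod>u\<in>E. c u (u \<in> symd D E))"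
    using prod.subset_diff[OF assms] .
  also have "(\<Prod>u\<in>A - E. c u (u \<in> symd D E)) = (\<Prod>u\<in>A - E. c u (u \<in> D))"
    by (rule prod.cong) (auto simp: symd_def)
  also have "(\<Prod>u\<in>E. c u (u \<in> symd D E)) = (\<Prod>u\<in>E. c u (u \<notin> D))"
    by (rule prod.cong) (auto simp: symd_def)
  finally show ?thesis by (simp add: mult.commute)
qed

lemma W_power: "finite E \<Longrightarrow> x ^ W E = (\<Prod>u\<in>E. x ^ snd u)"
  unfolding W_def by (rule power_sum)

lemma OpP_prod:
  assumes hyp: "\<And>D. D \<subseteq> U s N \<Longrightarrow> \<phi> D = \<kappa> * (\<Prod>u\<in>U s N. c u (u \<in> D))"
    and D: "D \<subseteq> U s N"
  shows "OpP s N x \<phi> D = \<kappa> * (\<Prod>u\<in>U s N. c u (u \<in> D) + x ^ snd u * c u (u \<notin> D))"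
proof -
  have "OpP s N x \<phi> D = (\<Sum>E\<in>Pow (U s N). \<kappa> * ((\<Prod>u\<in>E. x ^ snd u * c u (u \<notin> D)) * (\<Prod>u\<in>U s N - E. c u (u \<in> D))))"
    unfolding OpP_def
  proof (rule sum.cong[OF refl])
    fix E assume "E \<in> Pow (U s N)"
    then have E: "E \<subseteq> U s N" by auto
    have fE: "finite E" using finite_subset[OF E finite_U] .
    have e1: "\<phi> (symd D E) = \<kappa> * ((\<Prod>u\<in>E. c u (u \<notin> D)) * (\<Prod>u\<in>U s N - E. c u (u \<in> D)))"
      unfolding hyp[OF symd_sub[OF D E]] prod_symd[OF E finite_U] by (rule refl)
    have ac: "\<And>a b d::real. a * (\<kappa> * (b * d)) = \<kappa> * ((a * b) * d)" by (simp add: algebra_simps)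
    have "x ^ W E * \<phi> (symd D E) = (\<Prod>u\<in>E. x ^ snd u) * (\<kappa> * ((\<Prod>u\<in>E. c u (u \<notin> D)) * (\<Prod>u\<in>U s N - E. c u (u \<in> D))))"
      unfolding e1 W_power[OF fE] by (rule refl)
    also have "\<dots> = \<kappa> * ((\<Prod>u\<in>E. x ^ snd u * c u (u \<notin> D)) * (\<Prod>u\<in>U s N - E. c u (u \<in> D)))"
      unfolding ac prod.distrib by (rule refl)
    finally show "x ^ W E * \<phi> (symd D E) = \<kappa> * ((\<Prod>u\<in>E. x ^ snd u * c u (u \<notin> D)) * (\<Prod>u\<in>U s N - E. c u (u \<in> D)))" .
  qed
  also have "\<dots> = \<kappa> * (\<Sum>E\<in>Pow (U s N). (\<Prod>u\<in>E. x ^ snd u * c u (u \<notin> D)) * (\<Prod>u\<in>U s N - E. c u (u \<in> D)))"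
    by (rule sum_distrib_left[symmetric])
  also have "(\<Sum>E\<in>Pow (U s N). (\<Prod>u\<in>E. x ^ snd u * c u (u \<notin> D)) * (\<Prod>u\<in>U s N - E. c u (u \<in> D)))
      = (\<Prod>u\<in>U s N. x ^ snd u * c u (u \<notin> D) + c u (u \<in> D))"
    by (rule prod_add[symmetric, OF finite_U])
  also have "\<dots> = (\<Prod>u\<in>U s N. c u (u \<in> D) + x ^ snd u * c u (u \<notin> D))"
    by (rule prod.cong[OF refl]) (rule add.commute)
  finally show ?thesis .
qed

lemma OpP_iter:
  assumes D: "D \<subseteq> U s N"
  shows "(OpP s N x ^^ k) (\<lambda>D. \<kappa> * (\<Prod>u\<in>U s N. cc x y 0 (snd u) (u \<in> D))) D = \<kappa> * (\<Prod>u\<in>U s N. cc x y k (snd u) (u \<in> D))"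
  using D
proof (induction k arbitrary: D)
  case 0 then show ?case by simp
next
  case (Suc k)
  have "(OpP s N x ^^ Suc k) (\<lambda>D. \<kappa> * (\<Prod>u\<in>U s N. cc x y 0 (snd u) (u \<in> D))) D
      = OpP s N x ((OpP s N x ^^ k) (\<lambda>D. \<kappa> * (\<Prod>u\<in>U s N. cc x y 0 (snd u) (u \<in> D)))) D" by simp
  also have "\<dots> = \<kappa> * (\<Prod>u\<in>U s N. cc x y k (snd u) (u \<in> D) + x ^ snd u * cc x y k (snd u) (u \<notin> D))"
    using OpP_prod[of s N "(OpP s N x ^^ k) (\<lambda>D. \<kappa> * (\<Prod>u\<in>U s N. cc x y 0 (snd u) (u \<in> D)))" \<kappa>
        "\<lambda>u b. cc x y k (snd u) b" D x] Suc.IH Suc.prems by blast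
  also have "\<dots> = \<kappa> * (\<Prod>u\<in>U s N. cc x y (Suc k) (snd u) (u \<in> D))" by simp
  finally show ?case .
qed

lemma cc_sum_diff:
  "cc x y k l False + cc x y k l True = (1 + x^l)^k * (1 + y^l) \<and>
   cc x y k l False - cc x y k l True = (1 - x^l)^k * (1 - y^l)"
proof (induction k)
  case 0 then show ?case by simp
next
  case (Suc k)
  have "cc x y (Suc k) l False + cc x y (Suc k) l True = (1 + x^l) * (cc x y k l False + cc x y k l True)"
    by (simp add: algebra_simps)
  moreover have "cc x y (Suc k) l False - cc x y (Suc k) l True = (1 - x^l) * (cc x y k l False - cc x y k l True)"
    by (simp add: algebra_simps)
  ultimately show ?case using Suc.IH by simp
qed


definition ind :: "nat \<Rightarrow> nat \<Rightarrow> (nat \<times> nat) set \<Rightarrow> real" where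
  "ind s N D = (if D \<in> FQ s N then 1 else 0)"

lemma cc_F: "cc x y k l False = ((1 + x^l)^k * (1 + y^l) + (1 - x^l)^k * (1 - y^l)) / 2"
proof -
  have h1: "cc x y k l False + cc x y k l True = (1 + x^l)^k * (1 + y^l)"
    and h2: "cc x y k l False - cc x y k l True = (1 - x^l)^k * (1 - y^l)"
    using cc_sum_diff[of x y k l] by auto
  have g: "\<And>F T A B::real. F + T = A \<Longrightarrow> F - T = B \<Longrightarrow> F = (A + B) / 2 \<and> T = (A - B) / 2"
    by (auto simp: field_simps)
  from g[OF h1 h2] show ?thesis by blast
qed

lemma cc_T: "cc x y k l True = ((1 + x^l)^k * (1 + y^l) - (1 - x^l)^k * (1 - y^l)) / 2"
proof -
  have h1: "cc x y k l False + cc x y k l True = (1 + x^l)^k * (1 + y^l)"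
    and h2: "cc x y k l False - cc x y k l True = (1 - x^l)^k * (1 - y^l)"
    using cc_sum_diff[of x y k l] by auto
  have g: "\<And>F T A B::real. F + T = A \<Longrightarrow> F - T = B \<Longrightarrow> F = (A + B) / 2 \<and> T = (A - B) / 2"
    by (auto simp: field_simps)
  from g[OF h1 h2] show ?thesis by blast
qed

lemma cc_props:
  assumes "0 \<le> x" "x \<le> 1" "0 \<le> y" "y \<le> 1"
  shows "0 \<le> cc x y k l b \<and> cc x y k l b \<le> cc x y k l False"
proof -
  have a0: "0 \<le> x^l" "x^l \<le> 1" using assms by (auto simp: power_le_one)
  have b0: "0 \<le> y^l" "y^l \<le> 1" using assms by (auto simp: power_le_one)
  have p1: "0 \<le> (1 - x^l)^k" using a0 by simp
  have p2: "(1 - x^l)^k \<le> (1 + x^l)^k" using a0 by (intro power_mono) auto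
  have q: "(1 - x^l)^k * (1 - y^l) \<le> (1 + x^l)^k * (1 + y^l)"
    using p1 p2 b0 by (intro mult_mono) auto
  have r: "0 \<le> (1 - x^l)^k * (1 - y^l)" using p1 b0 by simp
  have "0 \<le> cc x y k l True" "cc x y k l True \<le> cc x y k l False" "0 \<le> cc x y k l False"
    using q r unfolding cc_F cc_T by auto
  then show ?thesis by (cases b) auto
qed

lemma OpS_mono:
  assumes "\<And>D. D \<subseteq> U s N \<Longrightarrow> \<phi> D \<le> \<phi>' D" "D \<subseteq> U s N"
  shows "OpS s N \<phi> D \<le> OpS s N \<phi>' D"
  unfolding OpS_def
proof (rule sum_mono)
  fix E assume "E \<in> FQ s N"
  then show "\<phi> (symd D E) \<le> \<phi>' (symd D E)" using assms symd_sub[OF assms(2) FQ_sub] by blast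
qed

lemma OpS_le_OpP:
  assumes x: "0 < x" "x \<le> 1" and nn: "\<And>D. D \<subseteq> U s N \<Longrightarrow> 0 \<le> \<phi> D" and D: "D \<subseteq> U s N"
  shows "OpS s N \<phi> D \<le> OpP s N x \<phi> D / x ^ N"
proof -
  have "OpS s N \<phi> D \<le> (\<Sum>E\<in>FQ s N. x ^ W E / x ^ N * \<phi> (symd D E))"
    unfolding OpS_def
  proof (rule sum_mono)
    fix E assume E: "E \<in> FQ s N"
    then have "W E \<le> N" unfolding FQ_def by simp
    then have "x ^ N \<le> x ^ W E" using x by (intro power_decreasing) auto
    then have "1 \<le> x ^ W E / x ^ N" using x by simp
    moreover have "0 \<le> \<phi> (symd D E)" using nn symd_sub[OF D FQ_sub[OF E]] by blast
    ultimately show "\<phi> (symd D E) \<le> x ^ W E / x ^ N * \<phi> (symd D E)"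
      using mult_right_mono[of 1 "x ^ W E / x ^ N" "\<phi> (symd D E)"] by simp
  qed
  also have "\<dots> \<le> (\<Sum>E\<in>Pow (U s N). x ^ W E / x ^ N * \<phi> (symd D E))"
  proof (rule sum_mono2)
    show "finite (Pow (U s N))" by simp
    show "FQ s N \<subseteq> Pow (U s N)" using FQ_sub by blast
    fix E assume "E \<in> Pow (U s N) - FQ s N"
    then have "E \<subseteq> U s N" by auto
    then have "0 \<le> \<phi> (symd D E)" using nn symd_sub[OF D] by blast
    then show "0 \<le> x ^ W E / x ^ N * \<phi> (symd D E)" using x by simp
  qed
  also have "\<dots> = OpP s N x \<phi> D / x ^ N"
    unfolding OpP_def by (simp add: sum_divide_distrib)
  finally show ?thesis .
qed

lemma OpP_div: "OpP s N x (\<lambda>D. \<phi> D / a) D = OpP s N x \<phi> D / a"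
  unfolding OpP_def by (simp add: sum_divide_distrib)

lemma rankin:
  assumes x: "0 < x" "x \<le> 1" and y: "0 < y" "y \<le> 1"
  shows "D \<subseteq> U s N \<Longrightarrow> (OpS s N ^^ k) (ind s N) D \<le> (\<Prod>u\<in>U s N. cc x y k (snd u) (u \<in> D)) / (y ^ N * x ^ (k * N))"
proof (induction k arbitrary: D)
  case 0
  show ?case
  proof (cases "D \<in> FQ s N")
    case True
    then have "W D \<le> N" unfolding FQ_def by simp
    then have "y ^ N \<le> y ^ W D" using y by (intro power_decreasing) auto
    moreover have "finite D" using finite_subset[OF 0 finite_U] .
    moreover have "(\<Prod>u\<in>U s N. cc x y 0 (snd u) (u \<in> D)) = (\<Prod>u\<in>D. y ^ snd u)"
    proof -
      have "(\<Prod>u\<in>U s N. cc x y 0 (snd u) (u \<in> D)) = (\<Prod>u\<in>U s N. if u \<in> D then y ^ snd u else 1)"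
        by simp
      also have "\<dots> = (\<Prod>u\<in>U s N \<inter> D. y ^ snd u)" by (rule prod.inter_restrict[symmetric]) simp
      also have "U s N \<inter> D = D" using 0 by auto
      finally show ?thesis .
    qed
    ultimately show ?thesis using True y by (simp add: ind_def W_power[symmetric])
  next
    case False
    have "0 \<le> (\<Prod>u\<in>U s N. cc x y 0 (snd u) (u \<in> D))"
      using cc_props[of x y] x y by (intro prod_nonneg) auto
    then show ?thesis using False x y by (simp add: ind_def)
  qed
next
  case (Suc k)
  let ?B = "\<lambda>D. (\<Prod>u\<in>U s N. cc x y k (snd u) (u \<in> D)) / (y ^ N * x ^ (k * N))"
  have nn: "0 \<le> ?B D'" if "D' \<subseteq> U s N" for D'
    using cc_props[of x y] x y by (intro divide_nonneg_nonneg prod_nonneg) auto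
  have "(OpS s N ^^ Suc k) (ind s N) D = OpS s N ((OpS s N ^^ k) (ind s N)) D" by simp
  also have "\<dots> \<le> OpS s N ?B D" by (rule OpS_mono[OF Suc.IH Suc.prems])
  also have "\<dots> \<le> OpP s N x ?B D / x ^ N" by (rule OpS_le_OpP[OF x nn Suc.prems])
  also have "OpP s N x ?B D = OpP s N x (\<lambda>D. (1 / y ^ N) * (\<Prod>u\<in>U s N. cc x y k (snd u) (u \<in> D))) D / x ^ (k * N)"
    by (subst OpP_div[symmetric]) (simp add: field_simps)
  also have "OpP s N x (\<lambda>D. (1 / y ^ N) * (\<Prod>u\<in>U s N. cc x y k (snd u) (u \<in> D))) D
      = (1 / y ^ N) * (\<Prod>u\<in>U s N. cc x y k (snd u) (u \<in> D) + x ^ snd u * cc x y k (snd u) (u \<notin> D))"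
    by (rule OpP_prod[OF _ Suc.prems]) (rule refl)
  also have "(\<Prod>u\<in>U s N. cc x y k (snd u) (u \<in> D) + x ^ snd u * cc x y k (snd u) (u \<notin> D))
      = (\<Prod>u\<in>U s N. cc x y (Suc k) (snd u) (u \<in> D))" by simp
  finally show ?case using x y by (simp add: field_simps power_add mult.commute)
qed

lemma rankin2:
  assumes x: "0 < x" "x \<le> 1" and y: "0 < y" "y \<le> 1" and D: "D \<subseteq> U s N"
  shows "(OpS s N ^^ k) (ind s N) D \<le> (\<Prod>u\<in>U s N. cc x y k (snd u) False) / (y ^ N * x ^ (k * N))"
proof -
  have "(\<Prod>u\<in>U s N. cc x y k (snd u) (u \<in> D)) \<le> (\<Prod>u\<in>U s N. cc x y k (snd u) False)"
    using cc_props[of x y] x y by (intro prod_mono) auto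
  then show ?thesis using rankin[OF x y D, of k] x y
    by (meson divide_right_mono order_trans zero_le_mult_iff zero_less_power less_imp_le)
qed


definition Zs :: "real \<Rightarrow> (nat \<times> nat) set \<Rightarrow> real" where
  "Zs x S = (\<Prod>u\<in>S. 1 + x ^ snd u)"
definition ms :: "real \<Rightarrow> (nat \<times> nat) set \<Rightarrow> real" where
  "ms x S = (\<Sum>u\<in>S. real (snd u) * x ^ snd u / (1 + x ^ snd u))"
definition Vs :: "real \<Rightarrow> (nat \<times> nat) set \<Rightarrow> real" where
  "Vs x S = (\<Sum>u\<in>S. real (snd u) ^ 2 * x ^ snd u / (1 + x ^ snd u) ^ 2)"

lemma alg_q:
  fixes Z V d q l :: real
  assumes q: "q \<noteq> 0"
  shows "Z * (V + d^2) + (q - 1) * (Z * (V + (d + l)^2)) = (Z * q) * ((V + l^2 * (q - 1) / q^2) + (d + l * (q - 1) / q)^2)"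
  using q by (simp add: field_simps power2_eq_square)

lemma alg_step:
  fixes Z V m c a l :: real
  assumes "0 < a"
  shows "Z * (V + (m - c)^2) + a * (Z * (V + (m - (c - l))^2))
    = (Z * (1 + a)) * ((V + l^2 * a / (1 + a)^2) + ((m + l * a / (1 + a)) - c)^2)"
  using alg_q[of "1 + a" Z V "m - c" l] assms by (simp add: algebra_simps)

lemma W_insert: "finite D \<Longrightarrow> a \<notin> D \<Longrightarrow> W (insert a D) = snd a + W D"
  unfolding W_def by simp

lemma moments:
  assumes "finite S" "0 < x"
  shows "(\<Sum>D\<in>Pow S. x ^ W D) = Zs x S \<and>
         (\<forall>c. (\<Sum>D\<in>Pow S. x ^ W D * (real (W D) - c)^2) = Zs x S * (Vs x S + (ms x S - c)^2))"
  using assms(1)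
proof (induction S rule: finite_induct)
  case empty
  show ?case by (simp add: Zs_def Vs_def ms_def W_def)
next
  case (insert a A)
  let ?l = "snd a"
  have disj: "Pow A \<inter> insert a ` Pow A = {}" using insert.hyps by auto
  have inj: "inj_on (insert a) (Pow A)"
    by (rule inj_onI) (use insert.hyps in \<open>auto simp: insert_ident\<close>)
  have fA: "finite (Pow A)" using insert.hyps by simp
  have Wi: "\<And>D. D \<in> Pow A \<Longrightarrow> W (insert a D) = ?l + W D"
    using insert.hyps by (intro W_insert) (auto intro: finite_subset)
  have split: "\<And>f::(nat\<times>nat) set \<Rightarrow> real. (\<Sum>D\<in>Pow (insert a A). f D) = (\<Sum>D\<in>Pow A. f D) + (\<Sum>D\<in>Pow A. f (insert a D))"
  proof -
    fix f :: "(nat\<times>nat) set \<Rightarrow> real"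
    have "(\<Sum>D\<in>Pow (insert a A). f D) = (\<Sum>D\<in>Pow A \<union> insert a ` Pow A. f D)" by (simp add: Pow_insert)
    also have "\<dots> = (\<Sum>D\<in>Pow A. f D) + (\<Sum>D\<in>insert a ` Pow A. f D)"
      by (rule sum.union_disjoint) (use fA disj in auto)
    also have "(\<Sum>D\<in>insert a ` Pow A. f D) = (\<Sum>D\<in>Pow A. f (insert a D))"
      by (rule sum.reindex[OF inj, unfolded comp_def])
    finally show "(\<Sum>D\<in>Pow (insert a A). f D) = (\<Sum>D\<in>Pow A. f D) + (\<Sum>D\<in>Pow A. f (insert a D))" .
  qed
  have Z: "Zs x (insert a A) = Zs x A * (1 + x ^ ?l)" using insert.hyps by (simp add: Zs_def mult.commute)
  have m: "ms x (insert a A) = ms x A + ?l * x ^ ?l / (1 + x ^ ?l)" using insert.hyps by (simp add: ms_def)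
  have V: "Vs x (insert a A) = Vs x A + real ?l ^ 2 * x ^ ?l / (1 + x ^ ?l)^2" using insert.hyps by (simp add: Vs_def)
  have p1: "(\<Sum>D\<in>Pow (insert a A). x ^ W D) = Zs x (insert a A)"
  proof -
    have "(\<Sum>D\<in>Pow (insert a A). x ^ W D) = (\<Sum>D\<in>Pow A. x ^ W D) + (\<Sum>D\<in>Pow A. x ^ ?l * x ^ W D)"
      unfolding split by (simp add: Wi power_add)
    also have "\<dots> = Zs x A + x ^ ?l * Zs x A" using insert.IH by (simp add: sum_distrib_left[symmetric])
    also have "\<dots> = Zs x A * (1 + x ^ ?l)" by (simp add: algebra_simps)
    finally show ?thesis using Z by simp
  qed
  have p2: "(\<Sum>D\<in>Pow (insert a A). x ^ W D * (real (W D) - c)^2) = Zs x (insert a A) * (Vs x (insert a A) + (ms x (insert a A) - c)^2)" for c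
  proof -
    have "(\<Sum>D\<in>Pow (insert a A). x ^ W D * (real (W D) - c)^2)
        = (\<Sum>D\<in>Pow A. x ^ W D * (real (W D) - c)^2) + (\<Sum>D\<in>Pow A. x ^ ?l * (x ^ W D * (real (W D) - (c - ?l))^2))"
      unfolding split by (simp add: Wi power_add algebra_simps)
    also have "\<dots> = Zs x A * (Vs x A + (ms x A - c)^2) + x ^ ?l * (Zs x A * (Vs x A + (ms x A - (c - ?l))^2))"
      using insert.IH by (simp add: sum_distrib_left[symmetric])
    also have "\<dots> = (Zs x A * (1 + x ^ ?l)) * ((Vs x A + real ?l ^ 2 * x ^ ?l / (1 + x ^ ?l)^2) + ((ms x A + ?l * x ^ ?l / (1 + x ^ ?l)) - c)^2)"
      by (rule alg_step) (use assms(2) in simp)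
    finally show ?thesis using Z m V by simp
  qed
  show ?case using p1 p2 by blast
qed


lemma fam_lower:
  assumes x: "0 < x" "x < 1" and M: "0 < M"
    and hm: "ms x (U s N) = real N - M / 2" and hv: "Vs x (U s N) \<le> M^2 / 8"
  shows "Zs x (U s N) / 2 \<le> real (card (Fam s N)) * x powr (real N - M)"
proof -
  let ?S = "U s N" let ?m = "ms x (U s N)" let ?Z = "Zs x (U s N)"
  define G where "G = {D \<in> Pow ?S. \<bar>real (W D) - ?m\<bar> < M / 2}"
  have mom: "(\<Sum>D\<in>Pow ?S. x ^ W D) = ?Z" "(\<Sum>D\<in>Pow ?S. x ^ W D * (real (W D) - ?m)^2) = ?Z * Vs x ?S"
    using moments[OF finite_U x(1), of s N] by auto
  have Zpos: "0 \<le> ?Z" unfolding Zs_def using x by (intro prod_nonneg) auto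
  have GS: "G \<subseteq> Pow ?S" unfolding G_def by auto
  have fin: "finite (Pow ?S)" by simp
  have "(\<Sum>D\<in>Pow ?S - G. x ^ W D) \<le> (\<Sum>D\<in>Pow ?S - G. x ^ W D * (real (W D) - ?m)^2 / (M/2)^2)"
  proof (rule sum_mono)
    fix D assume "D \<in> Pow ?S - G"
    then have "M / 2 \<le> \<bar>real (W D) - ?m\<bar>" unfolding G_def by auto
    then have "(M/2)^2 \<le> (real (W D) - ?m)^2" using M by (metis abs_le_square_iff abs_of_pos half_gt_zero)
    then have "1 \<le> (real (W D) - ?m)^2 / (M/2)^2" using M by simp
    then show "x ^ W D \<le> x ^ W D * (real (W D) - ?m)^2 / (M/2)^2"
      using x mult_left_mono[of 1 "(real (W D) - ?m)^2 / (M/2)^2" "x ^ W D"] by simp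
  qed
  also have "\<dots> \<le> (\<Sum>D\<in>Pow ?S. x ^ W D * (real (W D) - ?m)^2 / (M/2)^2)"
    by (rule sum_mono2) (use x in auto)
  also have "\<dots> = ?Z * Vs x ?S / (M/2)^2" unfolding sum_divide_distrib[symmetric] mom(2) by (rule refl)
  also have "\<dots> \<le> ?Z * (M^2/8) / (M/2)^2" using hv Zpos M by (intro divide_right_mono mult_left_mono) auto
  also have "\<dots> = ?Z / 2" using M by (simp add: field_simps power2_eq_square)
  finally have out: "(\<Sum>D\<in>Pow ?S - G. x ^ W D) \<le> ?Z / 2" .
  have "(\<Sum>D\<in>Pow ?S. x ^ W D) = (\<Sum>D\<in>G. x ^ W D) + (\<Sum>D\<in>Pow ?S - G. x ^ W D)"
    using sum.subset_diff[OF GS fin, of "\<lambda>D. x ^ W D"] by (simp add: add.commute)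
  then have inG: "?Z / 2 \<le> (\<Sum>D\<in>G. x ^ W D)" using out mom(1) by simp
  also have "\<dots> \<le> (\<Sum>D\<in>G. x powr (real N - M))"
  proof (rule sum_mono)
    fix D assume "D \<in> G"
    then have a: "\<bar>real (W D) - ?m\<bar> < M / 2" unfolding G_def by auto
    then have "real N - M \<le> real (W D)" using abs_less_iff[of "real (W D) - ?m" "M/2"] hm by linarith
    then have "x powr real (W D) \<le> x powr (real N - M)" using x by (intro powr_mono') auto
    then show "x ^ W D \<le> x powr (real N - M)" using powr_realpow[OF x(1)] by simp
  qed
  also have "\<dots> = real (card G) * x powr (real N - M)" by simp
  also have "\<dots> \<le> real (card (Fam s N)) * x powr (real N - M)"
  proof (rule mult_right_mono)
    have "G \<subseteq> Fam s N"
    proof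
      fix D assume "D \<in> G"
      then have a: "\<bar>real (W D) - ?m\<bar> < M / 2" unfolding G_def by auto
      then have "real (W D) < real N" using abs_less_iff[of "real (W D) - ?m" "M/2"] hm by linarith
      then show "D \<in> Fam s N" using \<open>D \<in> G\<close> unfolding G_def Fam_def by auto
    qed
    moreover have "finite (Fam s N)" unfolding Fam_def by (rule finite_subset[of _ "Pow ?S"]) auto
    ultimately show "real (card G) \<le> real (card (Fam s N))" by (simp add: card_mono)
  qed simp
  finally show ?thesis .
qed

lemma card_FQ_Fam:
  assumes "1 \<le> s" "1 \<le> N"
  shows "real (card (Fam s N)) \<le> 2 * real (card (FQ s N))" "1 \<le> card (FQ s N)"
proof -
  have e: "Fam s N = insert {} (FQ s N)" unfolding Fam_def FQ_def by (auto simp: W_def)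
  have n: "{} \<notin> FQ s N" unfolding FQ_def by simp
  have "{(0,1)} \<in> FQ s N" using assms unfolding FQ_def U_def W_def by auto
  then show c1: "1 \<le> card (FQ s N)" using finite_FQ by (metis One_nat_def Suc_leI card_gt_0_iff empty_iff)
  have "card (Fam s N) = card (FQ s N) + 1" unfolding e using n finite_FQ by simp
  then show "real (card (Fam s N)) \<le> 2 * real (card (FQ s N))" using c1 by simp
qed

lemma prod_U: "(\<Prod>u\<in>U s N. f (snd u)) = (\<Prod>l\<in>{1..N}. f l) ^ s"
proof -
  have "(\<Prod>u\<in>U s N. f (snd u)) = (\<Prod>j\<in>{..<s}. \<Prod>l\<in>{1..N}. f l)"
    unfolding U_def by (simp add: prod.cartesian_product')
  then show ?thesis by simp
qed

lemma sum_U: "(\<Sum>u\<in>U s N. f (snd u)) = real s * (\<Sum>l\<in>{1..N}. f l)"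
proof -
  have "(\<Sum>u\<in>U s N. f (snd u)) = (\<Sum>j\<in>{..<s}. \<Sum>l\<in>{1..N}. f l)"
    unfolding U_def by (simp add: sum.cartesian_product')
  then show ?thesis by simp
qed


lemma g_eq:
  assumes "0 \<le> x"
  shows "cc x y m l False / (1 + x^l)^m = 1 - (1 - y^l) * (1 - ((1 - x^l)/(1 + x^l))^m) / 2"
proof -
  have p0: "0 < 1 + x^l" using assms by (simp add: add_pos_nonneg)
  then have p2: "1 + x^l \<noteq> 0" by simp
  have p: "(1 + x^l) ^ m \<noteq> 0" using p0 by simp
  show ?thesis unfolding cc_F power_divide using p p2 by (simp add: field_simps)
qed

lemma master:
  assumes s: "1 \<le> s" "1 \<le> N" and x: "0 < x" "x < 1" and y: "0 < y" "y \<le> 1" and M: "0 < M"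
    and hm: "ms x (U s N) = real N - M / 2" and hv: "Vs x (U s N) \<le> M^2 / 8"
    and m: "1 \<le> m" "m \<le> r"
  shows "xor_prob s N r \<le> 4 ^ m / (y ^ N * x powr (real m * M)) *
           (\<Prod>l\<in>{1..N}. 1 - (1 - y^l) * (1 - ((1 - x^l)/(1 + x^l))^m) / 2) ^ s"
proof -
  define c where "c = real (card (FQ s N))"
  have c1: "1 \<le> c" using card_FQ_Fam(2)[OF s] unfolding c_def by simp
  define P where "P = (\<Prod>u\<in>U s N. cc x y m (snd u) False)"
  define B where "B = P / (y ^ N * x ^ (m * N))"
  define Z where "Z = Zs x (U s N)"
  define X where "X = x powr (real N - M)"
  have Xpos: "0 < X" unfolding X_def using x by simp
  have Zpos: "0 < Z" unfolding Z_def Zs_def using x by (intro prod_pos) (auto simp: add_pos_nonneg)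
  have Ppos: "0 \<le> P" unfolding P_def using cc_props[of x y] x y by (intro prod_nonneg) auto
  have indeq: "(\<lambda>D. if D \<in> FQ s N then 1 else 0) = ind s N" by (rule ext) (simp add: ind_def)
  have hphi: "0 \<le> (OpS s N ^^ m) (ind s N) D \<and> (OpS s N ^^ m) (ind s N) D \<le> B" if "D \<subseteq> U s N" for D
  proof
    show "0 \<le> (OpS s N ^^ m) (ind s N) D"
      using OpS_bound[of s N "ind s N" 1 D m] that by (simp add: ind_def)
    show "(OpS s N ^^ m) (ind s N) D \<le> B" unfolding B_def P_def
      using rankin2[of x y D s N m] x y that by simp
  qed
  have "(OpS s N ^^ r) (ind s N) {} = (OpS s N ^^ (r - m)) ((OpS s N ^^ m) (ind s N)) {}"
  proof -
    have "r = (r - m) + m" using m by simp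
    then have "(OpS s N ^^ r) = (OpS s N ^^ (r - m)) \<circ> (OpS s N ^^ m)" by (metis funpow_add)
    then show ?thesis by simp
  qed
  also have "\<dots> \<le> c ^ (r - m) * B"
    using OpS_bound[of s N "(OpS s N ^^ m) (ind s N)" B "{}" "r - m"] hphi unfolding c_def by auto
  finally have num: "(OpS s N ^^ r) (ind s N) {} \<le> c ^ (r - m) * B" .
  have xp: "xor_prob s N r = (OpS s N ^^ r) (ind s N) {} / c ^ r"
    using xor_prob_OpS[of s N r] unfolding indeq c_def .
  have cpos: "0 < c" using c1 by simp
  have step1: "xor_prob s N r \<le> B / c ^ m"
  proof -
    have "xor_prob s N r \<le> c ^ (r - m) * B / c ^ r" unfolding xp using num cpos by (simp add: divide_right_mono)
    also have "c ^ r = c ^ (r - m) * c ^ m" using m by (simp add: power_add[symmetric])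
    also have "c ^ (r - m) * B / (c ^ (r - m) * c ^ m) = B / c ^ m" using cpos by simp
    finally show ?thesis .
  qed
  have Zc: "Z \<le> 4 * c * X"
  proof -
    have "Z / 2 \<le> real (card (Fam s N)) * X" unfolding Z_def X_def by (rule fam_lower[OF x M hm hv])
    also have "\<dots> \<le> 2 * c * X" using card_FQ_Fam(1)[OF s] Xpos unfolding c_def by (intro mult_right_mono) auto
    finally show ?thesis by simp
  qed
  have cm: "(Z / (4 * X)) ^ m \<le> c ^ m"
    using Zc Xpos Zpos by (intro power_mono) (auto simp: field_simps)
  have Bpos: "0 \<le> B" unfolding B_def using Ppos x y by simp
  have step2: "B / c ^ m \<le> B / (Z / (4 * X)) ^ m"
  proof (rule divide_left_mono[OF cm Bpos])
    have "0 < (Z / (4 * X)) ^ m" using Zpos Xpos by simp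
    moreover have "0 < c ^ m" using cpos by simp
    ultimately show "0 < c ^ m * (Z / (4 * X)) ^ m" by simp
  qed
  have "B / (Z / (4 * X)) ^ m = 4 ^ m * (P / Z ^ m) * (X ^ m / x ^ (m * N)) / y ^ N"
    unfolding B_def using Zpos Xpos x y by (simp add: field_simps power_divide power_mult_distrib)
  also have "X ^ m / x ^ (m * N) = 1 / x powr (real m * M)"
  proof -
    have "X ^ m = x powr (real m * (real N - M))" unfolding X_def using x by (simp add: powr_power)
    moreover have "x ^ (m * N) = x powr (real m * real N)" using x by (simp add: powr_realpow[symmetric])
    ultimately have "X ^ m / x ^ (m * N) = x powr (real m * (real N - M) - real m * real N)"
      by (simp add: powr_diff)
    also have "real m * (real N - M) - real m * real N = - (real m * M)" by (simp add: algebra_simps)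
    finally show ?thesis by (simp add: powr_minus_divide)
  qed
  also have "P / Z ^ m = (\<Prod>l\<in>{1..N}. 1 - (1 - y^l) * (1 - ((1 - x^l)/(1 + x^l))^m) / 2) ^ s"
  proof -
    have "Z ^ m = (\<Prod>u\<in>U s N. (1 + x ^ snd u) ^ m)" unfolding Z_def Zs_def by (simp add: prod_power_distrib)
    then have "P / Z ^ m = (\<Prod>u\<in>U s N. cc x y m (snd u) False / (1 + x ^ snd u) ^ m)"
      unfolding P_def by (simp add: prod_dividef)
    also have "\<dots> = (\<Prod>u\<in>U s N. (\<lambda>l. 1 - (1 - y^l) * (1 - ((1 - x^l)/(1 + x^l))^m) / 2) (snd u))"
      using g_eq x by simp
    also have "\<dots> = (\<Prod>l\<in>{1..N}. 1 - (1 - y^l) * (1 - ((1 - x^l)/(1 + x^l))^m) / 2) ^ s"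
      by (rule prod_U)
    finally show ?thesis .
  qed
  finally have "B / (Z / (4 * X)) ^ m = 4 ^ m / (y ^ N * x powr (real m * M)) *
           (\<Prod>l\<in>{1..N}. 1 - (1 - y^l) * (1 - ((1 - x^l)/(1 + x^l))^m) / 2) ^ s"
    by simp
  then show ?thesis using step1 step2 by linarith
qed


lemma lz_bound:
  fixes z :: real
  assumes z: "0 \<le> z" "z < 1"
  shows "real l * z ^ l \<le> 1 / (1 - z)"
proof -
  have "real l * z ^ l = (\<Sum>k<l. z ^ l)" by simp
  also have "\<dots> \<le> (\<Sum>k<l. z ^ k)" using z by (intro sum_mono power_decreasing) auto
  also have "\<dots> = (1 - z ^ l) / (1 - z)" using z by (simp only: sum_gp_strict) simp
  also have "\<dots> \<le> 1 / (1 - z)" using z by (intro divide_right_mono) auto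
  finally show ?thesis .
qed

lemma geo_bound:
  fixes z :: real
  assumes z: "0 \<le> z" "z < 1"
  shows "(\<Sum>l\<in>{1..N}. z ^ l) \<le> 1 / (1 - z)"
proof -
  have "(\<Sum>l\<in>{1..N}. z ^ l) \<le> (\<Sum>l<Suc N. z ^ l)" using z by (intro sum_mono2) auto
  also have "\<dots> = (1 - z ^ Suc N) / (1 - z)" using z by (simp only: sum_gp_strict) simp
  also have "\<dots> \<le> 1 / (1 - z)" using z by (intro divide_right_mono) auto
  finally show ?thesis .
qed

lemma sqrt_gap:
  fixes x :: real
  assumes "0 \<le> x" "x < 1"
  shows "1 - x \<le> 2 * (1 - sqrt x)" "sqrt x < 1" "0 \<le> sqrt x"
proof -
  have s: "sqrt x * sqrt x = x" using assms by simp
  have "sqrt x \<le> 1" using assms by simp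
  have e: "1 - x = (1 - sqrt x) * (1 + sqrt x)" using s by (simp add: algebra_simps)
  have "(1 - sqrt x) * (1 + sqrt x) \<le> (1 - sqrt x) * 2" using \<open>sqrt x \<le> 1\<close> by (intro mult_left_mono) auto
  then show "1 - x \<le> 2 * (1 - sqrt x)" using e by simp
  show "sqrt x < 1" using assms by simp
  show "0 \<le> sqrt x" using assms by simp
qed

lemma h2:
  fixes a b :: real
  assumes "0 < a" "0 < b" "b \<le> 2 * a"
  shows "(1 / a) * (1 / a) \<le> 4 / b^2"
proof -
  have "b^2 \<le> (2*a)^2" using assms by (intro power_mono) auto
  then have "b^2 \<le> 4 * (a * a)" by (simp add: power2_eq_square)
  then show ?thesis using assms by (simp add: field_simps)
qed

lemma h3:
  fixes a b :: real
  assumes "0 < a" "0 < b" "b \<le> 2 * a"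
  shows "(1 / a) * (4 / a^2) \<le> 32 / b^3"
proof -
  have "b^3 \<le> (2*a)^3" using assms by (intro power_mono) auto
  then have "b^3 \<le> 8 * (a * a^2)" by (simp add: power3_eq_cube power2_eq_square)
  then show ?thesis using assms by (simp add: field_simps)
qed

lemma sum_lx:
  fixes x :: real
  assumes x: "0 \<le> x" "x < 1"
  shows "(\<Sum>l\<in>{1..N}. real l * x ^ l) \<le> 4 / (1 - x)^2"
proof -
  define z where "z = sqrt x"
  have z: "0 \<le> z" "z < 1" "1 - x \<le> 2 * (1 - z)" using sqrt_gap[OF x] unfolding z_def by auto
  have zx: "z ^ l * z ^ l = x ^ l" for l unfolding z_def using x by (simp add: power_mult_distrib[symmetric])
  have "(\<Sum>l\<in>{1..N}. real l * x ^ l) = (\<Sum>l\<in>{1..N}. (real l * z ^ l) * z ^ l)" by (simp add: zx[symmetric] mult.assoc)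
  also have "\<dots> \<le> (\<Sum>l\<in>{1..N}. (1 / (1 - z)) * z ^ l)"
    using lz_bound[OF z(1,2)] z by (intro sum_mono mult_right_mono) auto
  also have "\<dots> = (1 / (1 - z)) * (\<Sum>l\<in>{1..N}. z ^ l)" by (simp add: sum_distrib_left)
  also have "\<dots> \<le> (1 / (1 - z)) * (1 / (1 - z))" using geo_bound[OF z(1,2)] z by (intro mult_left_mono) auto
  also have "\<dots> \<le> 4 / (1 - x)^2" using z x by (intro h2) auto
  finally show ?thesis .
qed

lemma sum_l2x:
  fixes x :: real
  assumes x: "0 \<le> x" "x < 1"
  shows "(\<Sum>l\<in>{1..N}. real l ^ 2 * x ^ l) \<le> 32 / (1 - x)^3"
proof -
  define z where "z = sqrt x"
  have z: "0 \<le> z" "z < 1" "1 - x \<le> 2 * (1 - z)" using sqrt_gap[OF x] unfolding z_def by auto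
  have zx: "z ^ l * z ^ l = x ^ l" for l unfolding z_def using x by (simp add: power_mult_distrib[symmetric])
  have "(\<Sum>l\<in>{1..N}. real l ^ 2 * x ^ l) = (\<Sum>l\<in>{1..N}. (real l * z ^ l) * (real l * z ^ l))"
    by (simp add: zx[symmetric] power2_eq_square mult_ac)
  also have "\<dots> \<le> (\<Sum>l\<in>{1..N}. (1 / (1 - z)) * (real l * z ^ l))"
    using lz_bound[OF z(1,2)] z by (intro sum_mono mult_right_mono) auto
  also have "\<dots> = (1 / (1 - z)) * (\<Sum>l\<in>{1..N}. real l * z ^ l)" by (simp add: sum_distrib_left)
  also have "\<dots> \<le> (1 / (1 - z)) * (4 / (1 - z)^2)" using sum_lx[OF z(1,2)] z by (intro mult_left_mono) auto
  also have "\<dots> \<le> 32 / (1 - x)^3" using z x by (intro h3) auto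
  finally show ?thesis .
qed


lemma ms_U: "ms x (U s N) = real s * (\<Sum>l\<in>{1..N}. real l * x ^ l / (1 + x ^ l))"
  unfolding ms_def by (rule sum_U)

lemma Vs_U: "Vs x (U s N) = real s * (\<Sum>l\<in>{1..N}. real l ^ 2 * x ^ l / (1 + x ^ l)^2)"
  unfolding Vs_def by (rule sum_U)

lemma div_le1: "0 \<le> a \<Longrightarrow> 1 \<le> d \<Longrightarrow> a / d \<le> (a::real)"
  using divide_left_mono[of 1 d a] by simp

lemma ms_upper:
  assumes "0 \<le> x" "x < 1"
  shows "ms x (U s N) \<le> real s * (4 / (1 - x)^2)"
proof -
  have "(\<Sum>l\<in>{1..N}. real l * x ^ l / (1 + x ^ l)) \<le> (\<Sum>l\<in>{1..N}. real l * x ^ l)"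
  proof (rule sum_mono)
    fix l :: nat
    have "0 \<le> real l * x ^ l" using assms by simp
    moreover have "1 \<le> 1 + x ^ l" using assms by simp
    ultimately show "real l * x ^ l / (1 + x ^ l) \<le> real l * x ^ l" by (rule div_le1)
  qed
  also have "\<dots> \<le> 4 / (1 - x)^2" by (rule sum_lx[OF assms])
  finally have "(\<Sum>l\<in>{1..N}. real l * x ^ l / (1 + x ^ l)) \<le> 4 / (1 - x)^2" .
  then have "real s * (\<Sum>l\<in>{1..N}. real l * x ^ l / (1 + x ^ l)) \<le> real s * (4 / (1 - x)^2)"
    by (rule mult_left_mono) simp
  then show ?thesis unfolding ms_U .
qed

lemma Vs_upper:
  assumes "0 \<le> x" "x < 1"
  shows "Vs x (U s N) \<le> real s * (32 / (1 - x)^3)"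
proof -
  have "(\<Sum>l\<in>{1..N}. real l ^ 2 * x ^ l / (1 + x ^ l)^2) \<le> (\<Sum>l\<in>{1..N}. real l ^ 2 * x ^ l)"
  proof (rule sum_mono)
    fix l :: nat
    have "0 \<le> real l ^ 2 * x ^ l" using assms by simp
    moreover have "1 \<le> (1 + x ^ l)^2" using assms by (simp add: one_le_power)
    ultimately show "real l ^ 2 * x ^ l / (1 + x ^ l)^2 \<le> real l ^ 2 * x ^ l" by (rule div_le1)
  qed
  also have "\<dots> \<le> 32 / (1 - x)^3" by (rule sum_l2x[OF assms])
  finally have "(\<Sum>l\<in>{1..N}. real l ^ 2 * x ^ l / (1 + x ^ l)^2) \<le> 32 / (1 - x)^3" .
  then have "real s * (\<Sum>l\<in>{1..N}. real l ^ 2 * x ^ l / (1 + x ^ l)^2) \<le> real s * (32 / (1 - x)^3)"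
    by (rule mult_left_mono) simp
  then show ?thesis unfolding Vs_U .
qed

lemma gauss_real: "(\<Sum>l\<in>{1..L}. real l) = real L * (real L + 1) / 2"
  by (induction L) (simp_all add: field_simps)

lemma ms_lower_near1:
  assumes s: "1 \<le> s" and N: "25 \<le> N" and x: "1 - 1 / (10 * sqrt (real N)) \<le> x" "x \<le> 1"
  shows "2 * real N \<le> ms x (U s N)"
proof -
  define q where "q = sqrt (real N)"
  have q5: "5 \<le> q" unfolding q_def using N real_sqrt_le_mono[of 25 "real N"] by simp
  have qq: "q * q = real N" unfolding q_def by simp
  define L where "L = nat \<lfloor>5 * q\<rfloor>"
  have L1: "real L \<le> 5 * q" unfolding L_def using q5 by linarith
  have L2: "5 * q - 1 \<le> real L" unfolding L_def using q5 by linarith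
  have LN: "L \<le> N"
  proof -
    have "5 * q \<le> q * q" using q5 by (intro mult_right_mono) auto
    then have "real L \<le> real N" using L1 qq by linarith
    then show ?thesis by simp
  qed
  have x0: "0 \<le> x" using x q5 unfolding q_def[symmetric] by (smt (verit) divide_le_eq_1_pos)
  have low: "1 / 4 \<le> x ^ l / (1 + x ^ l)" if "l \<le> L" for l
  proof -
    have h: "-1 \<le> x - 1" using x0 by simp
    have "1 + real l * (x - 1) \<le> (1 + (x - 1)) ^ l" by (rule Bernoulli_inequality[OF h])
    then have b: "1 - real l * (1 - x) \<le> x ^ l" by (simp add: algebra_simps)
    have "real l * (1 - x) \<le> 5 * q * (1 / (10 * q))"
      using that L1 x q5 unfolding q_def[symmetric] by (intro mult_mono) auto
    also have "\<dots> = 1 / 2" using q5 by simp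
    finally have "1 / 2 \<le> x ^ l" using b by linarith
    moreover have "x ^ l \<le> 1" using x0 x by (simp add: power_le_one)
    ultimately show ?thesis by (simp add: field_simps)
  qed
  have "(\<Sum>l\<in>{1..L}. real l / 4) \<le> (\<Sum>l\<in>{1..L}. real l * x ^ l / (1 + x ^ l))"
  proof (rule sum_mono)
    fix l assume "l \<in> {1..L}"
    then have "1 / 4 \<le> x ^ l / (1 + x ^ l)" using low by auto
    then have "real l * (1/4) \<le> real l * (x ^ l / (1 + x ^ l))" by (intro mult_left_mono) auto
    then show "real l / 4 \<le> real l * x ^ l / (1 + x ^ l)" by simp
  qed
  also have "\<dots> \<le> (\<Sum>l\<in>{1..N}. real l * x ^ l / (1 + x ^ l))"
    using LN x0 by (intro sum_mono2) auto
  finally have A: "(\<Sum>l\<in>{1..L}. real l) / 4 \<le> (\<Sum>l\<in>{1..N}. real l * x ^ l / (1 + x ^ l))"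
    by (simp add: sum_divide_distrib)
  have "16 * real N \<le> real L * (real L + 1)"
  proof -
    have "4 * q \<le> real L" using L2 q5 by linarith
    then have "(4 * q) * (4 * q) \<le> real L * real L" using q5 by (intro mult_mono) auto
    then show ?thesis using qq by (simp add: algebra_simps)
  qed
  then have "2 * real N \<le> (\<Sum>l\<in>{1..L}. real l) / 4" unfolding gauss_real by simp
  also have "\<dots> \<le> ms x (U s N)"
  proof -
    have "0 \<le> (\<Sum>l\<in>{1..N}. real l * x ^ l / (1 + x ^ l))" using x0 by (intro sum_nonneg) auto
    then have "(\<Sum>l\<in>{1..N}. real l * x ^ l / (1 + x ^ l)) \<le> real s * (\<Sum>l\<in>{1..N}. real l * x ^ l / (1 + x ^ l))"
      using s by (simp add: mult_le_cancel_right1)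
    then show ?thesis using A unfolding ms_U by linarith
  qed
  finally show ?thesis .
qed


lemma one_plus_pow_ne0: "0 \<le> (x::real) \<Longrightarrow> 1 + x ^ l \<noteq> 0"
  by (smt (verit) zero_le_power)

lemma ms_cont: "continuous_on {0..1} (\<lambda>x. ms x (U s N))"
  unfolding ms_U
  by (intro continuous_intros) (auto simp: one_plus_pow_ne0)

lemma ms_0: "ms 0 (U s N) = 0"
  unfolding ms_U by (simp add: power_0_left)

lemma ms_1: "ms 1 (U s N) = real s * (real N * (real N + 1) / 4)"
proof -
  have "(\<Sum>l\<in>{1..N}. real l * 1 ^ l / (1 + 1 ^ l)) = (\<Sum>l\<in>{1..N}. real l) / 2"
    by (simp add: sum_divide_distrib)
  then show ?thesis unfolding ms_U gauss_real by simp
qed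

lemma choose_x:
  assumes s: "1 \<le> s" and N: "25 \<le> N" "32 * real s \<le> real N" and M: "0 < M" "M \<le> real N"
  shows "\<exists>x. 1/2 \<le> x \<and> x < 1 \<and> ms x (U s N) = real N - M / 2 \<and>
             1 / (10 * sqrt (real N)) \<le> 1 - x \<and> 1 - x \<le> sqrt (8 * real s / real N)"
proof -
  define y0 where "y0 = real N - M / 2"
  have y0: "real N / 2 \<le> y0" "y0 < real N" using M unfolding y0_def by auto
  have f1: "real N \<le> ms 1 (U s N)"
  proof -
    have "real N * 4 \<le> real N * (real N + 1)" using N by (intro mult_left_mono) auto
    then have "real N \<le> real N * (real N + 1) / 4" by simp
    also have "\<dots> \<le> real s * (real N * (real N + 1) / 4)"
      using mult_right_mono[of 1 "real s" "real N * (real N + 1) / 4"] s by simp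
    finally show ?thesis unfolding ms_1 .
  qed
  obtain x where x01: "0 \<le> x" "x \<le> 1" and fx: "ms x (U s N) = y0"
    using IVT'[of "\<lambda>x. ms x (U s N)" 0 y0 1] ms_cont ms_0 f1 y0 by auto
  have gap: "1 / (10 * sqrt (real N)) \<le> 1 - x"
  proof (rule ccontr)
    assume "\<not> 1 / (10 * sqrt (real N)) \<le> 1 - x"
    then have "1 - 1 / (10 * sqrt (real N)) \<le> x" by simp
    then have "2 * real N \<le> ms x (U s N)" using ms_lower_near1[OF s N(1) _ x01(2)] by simp
    then show False using fx y0 by simp
  qed
  have Npos: "0 < real N" using N by simp
  have x1: "x < 1" using gap Npos by (smt (verit) divide_pos_pos real_sqrt_gt_zero)
  have "real N / 2 \<le> real s * (4 / (1 - x)^2)" using ms_upper[OF x01(1) x1, of s N] fx y0 by simp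
  then have "(1 - x)^2 \<le> 8 * real s / real N" using x1 Npos by (simp add: field_simps)
  then have up: "1 - x \<le> sqrt (8 * real s / real N)" by (rule real_le_rsqrt)
  have "8 * real s / real N \<le> 1 / 4" using N Npos by (simp add: field_simps)
  then have "sqrt (8 * real s / real N) \<le> sqrt (1/4)" by (rule real_sqrt_le_mono)
  also have "sqrt (1/4) = (1/2 :: real)" by (simp add: real_sqrt_divide)
  finally have "1/2 \<le> x" using up by simp
  then show ?thesis using x1 fx gap up unfolding y0_def by blast
qed


definition tm :: "real \<Rightarrow> real \<Rightarrow> nat \<Rightarrow> nat \<Rightarrow> real" where
  "tm x y m l = (1 - y ^ l) * (1 - ((1 - x ^ l) / (1 + x ^ l)) ^ m) / 2"

lemma prod_exp_bound:
  fixes t :: "nat \<Rightarrow> real"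
  assumes "\<And>l. l \<in> A \<Longrightarrow> 0 \<le> t l \<and> t l \<le> 1" and fin: "finite A"
  shows "(\<Prod>l\<in>A. 1 - t l) \<le> exp (- (\<Sum>l\<in>A. t l))"
proof -
  have "(\<Prod>l\<in>A. 1 - t l) \<le> (\<Prod>l\<in>A. exp (- t l))"
  proof (rule prod_mono)
    fix l assume "l \<in> A"
    then show "0 \<le> 1 - t l \<and> 1 - t l \<le> exp (- t l)"
      using assms(1)[of l] exp_ge_add_one_self[of "- t l"] by auto
  qed
  also have "\<dots> = exp (- (\<Sum>l\<in>A. t l))" by (subst sum_negf[symmetric]) (simp add: exp_sum[OF fin])
  finally show ?thesis .
qed

lemma t_props:
  fixes a :: real
  assumes "0 \<le> a" "a \<le> 1"
  shows "0 \<le> (1 - a) / (1 + a)" "(1 - a) / (1 + a) \<le> 1" "(1 - a) / (1 + a) \<le> 1 - a"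
  using assms mult_left_mono[of a 1 a] by (auto simp: field_simps)

lemma key_b:
  fixes b :: real
  assumes "b \<noteq> 0"
  shows "1 - ((2 - b) / b)^2 = 2 * (((b - 1) / b) * (1 + (2 - b) / b))"
  using assms by (simp add: field_simps power2_eq_square)

lemma tm_props:
  assumes "0 \<le> x" "x \<le> 1" "0 \<le> y" "y \<le> 1"
  shows "0 \<le> tm x y m l \<and> tm x y m l \<le> 1"
proof -
  let ?a = "x ^ l" let ?t = "(1 - x ^ l) / (1 + x ^ l)"
  have a: "0 \<le> ?a" "?a \<le> 1" using assms by (auto simp: power_le_one)
  have t: "0 \<le> ?t" "?t \<le> 1" using t_props[OF a] by auto
  have tm0: "0 \<le> ?t ^ m" "?t ^ m \<le> 1" using t by (auto simp: power_le_one)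
  have b: "0 \<le> y ^ l" "y ^ l \<le> 1" using assms by (auto simp: power_le_one)
  have "0 \<le> (1 - y ^ l) * (1 - ?t ^ m)" using b tm0 by simp
  moreover have "(1 - y ^ l) * (1 - ?t ^ m) \<le> 1 * 1" using b tm0 by (intro mult_mono) auto
  ultimately show ?thesis unfolding tm_def by simp
qed

lemma exp_lower_quad:
  fixes z :: real
  assumes "0 \<le> z"
  shows "z - z^2 \<le> 1 - exp (- z)"
proof -
  have "1 + z \<le> exp z" by (rule exp_ge_add_one_self)
  then have "exp (- z) \<le> 1 / (1 + z)" using assms by (simp add: exp_minus field_simps)
  moreover have "z - z^2 \<le> 1 - 1 / (1 + z)"
  proof -
    have "(z - z^2) * (1 + z) \<le> z" using assms by (simp add: algebra_simps power2_eq_square)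
    then show ?thesis using assms by (simp add: field_simps)
  qed
  ultimately show ?thesis by linarith
qed

lemma pow_exp_bound:
  fixes x :: real
  assumes "0 \<le> x"
  shows "x ^ l \<le> exp (- (1 - x) * real l)"
proof -
  have "x \<le> exp (- (1 - x))" using exp_ge_add_one_self[of "- (1 - x)"] by simp
  then have "x ^ l \<le> exp (- (1 - x)) ^ l" using assms by (intro power_mono) auto
  also have "\<dots> = exp (- (1 - x) * real l)" by (simp add: exp_of_nat_mult[symmetric] mult.commute)
  finally show ?thesis .
qed

lemma mult_2_div: "(u::real) * v = u * (2 * v) / 2" by simp

lemma tm_lower_G1:
  assumes x: "0 \<le> x" "x \<le> 1" and m: "2 \<le> m" and bq: "0 \<le> c" and y: "y = exp (- c)"
  shows "(c * real l - (c * real l)^2) * (x ^ l / (1 + x ^ l) * (1 + (1 - x ^ l) / (1 + x ^ l))) \<le> tm x y m l"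
proof -
  let ?a = "x ^ l" let ?t = "(1 - x ^ l) / (1 + x ^ l)" let ?p = "x ^ l / (1 + x ^ l)"
  have a: "0 \<le> ?a" "?a \<le> 1" using x by (auto simp: power_le_one)
  have t: "0 \<le> ?t" "?t \<le> 1" using t_props[OF a] by auto
  have tm2: "?t ^ m \<le> ?t ^ 2" using t m by (intro power_decreasing) auto
  have key: "1 - ?t ^ 2 = 2 * (?p * (1 + ?t))"
  proof -
    have "1 + ?a \<noteq> 0" using a by simp
    from key_b[OF this] show ?thesis by simp
  qed
  have nn: "0 \<le> ?p * (1 + ?t)" using a t by simp
  have yl: "y ^ l = exp (- (c * real l))" unfolding y by (simp add: exp_of_nat_mult[symmetric] mult.commute)
  have e: "c * real l - (c * real l)^2 \<le> 1 - y ^ l" unfolding yl using bq by (intro exp_lower_quad) simp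
  have "(c * real l - (c * real l)^2) * (?p * (1 + ?t)) \<le> (1 - y ^ l) * (?p * (1 + ?t))"
    by (rule mult_right_mono[OF e nn])
  also have "\<dots> = (1 - y ^ l) * (2 * (?p * (1 + ?t))) / 2"
    by (rule mult_2_div) 
  also have "\<dots> = (1 - y ^ l) * (1 - ?t ^ 2) / 2" by (simp only: key)
  also have "\<dots> \<le> (1 - y ^ l) * (1 - ?t ^ m) / 2"
  proof -
    have "0 \<le> 1 - y ^ l" unfolding yl using bq by simp
    then show ?thesis using tm2 by (intro divide_right_mono mult_left_mono) auto
  qed
  finally show ?thesis unfolding tm_def .
qed


definition tau :: "nat \<Rightarrow> real" where
  "tau s = (1 - exp (- (1 / (2 * sqrt (real s))) / 10)) / 2"

lemma tau_pos: "1 \<le> s \<Longrightarrow> 0 < tau s \<and> tau s \<le> 1/2"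
  unfolding tau_def by auto

lemma small_sum:
  fixes T :: real
  assumes "1 \<le> T"
  shows "(\<Sum>l\<in>{1..N}. if real l < T then real l else 0) \<le> T * T"
proof -
  define F where "F = nat \<lfloor>T\<rfloor>"
  have F: "real F \<le> T" unfolding F_def using assms by linarith
  have "(\<Sum>l\<in>{1..N}. if real l < T then real l else 0) = (\<Sum>l\<in>{l\<in>{1..N}. real l < T}. real l)"
    by (rule sum.inter_filter[symmetric]) simp
  also have "\<dots> \<le> (\<Sum>l\<in>{1..F}. real l)"
  proof (rule sum_mono2)
    show "{l \<in> {1..N}. real l < T} \<subseteq> {1..F}"
    proof
      fix l assume "l \<in> {l \<in> {1..N}. real l < T}"
      then have "1 \<le> l" "real l < T" by auto
      then have "l \<le> F" unfolding F_def by linarith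
      then show "l \<in> {1..F}" using \<open>1 \<le> l\<close> by simp
    qed
  qed auto
  also have "\<dots> = real F * (real F + 1) / 2" by (rule gauss_real)
  also have "\<dots> \<le> T * (T + 1) / 2" using F assms by (intro divide_right_mono mult_mono) auto
  also have "\<dots> \<le> T * T" using assms by (simp add: field_simps)
  finally show ?thesis .
qed

lemma G1_sum:
  assumes s: "1 \<le> s" and N: "4 * real s \<le> real N" "1 \<le> N"
    and x: "1/2 \<le> x" "x < 1" and gap: "1 / (10 * sqrt (real N)) \<le> 1 - x"
    and hm: "ms x (U s N) = real N - M / 2" and M: "0 \<le> M" "M \<le> real N"
    and m: "2 \<le> m" and b: "0 \<le> \<beta>" and y: "y = exp (- (\<beta> / sqrt (real N)))"
  shows "\<beta> * sqrt (real N) * (1 + tau s / 2) - \<beta> * M / sqrt (real N) - 64000 * real s * \<beta>^2 * sqrt (real N)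
         \<le> real s * (\<Sum>l\<in>{1..N}. tm x y m l)"
proof -
  define q where "q = sqrt (real N)"
  have q1: "1 \<le> q" unfolding q_def using N by simp
  have qq: "q * q = real N" unfolding q_def by simp
  define c where "c = \<beta> / q"
  have c0: "0 \<le> c" unfolding c_def using b q1 by simp
  define p where "p = (\<lambda>l::nat. x ^ l / (1 + x ^ l))"
  define t where "t = (\<lambda>l::nat. (1 - x ^ l) / (1 + x ^ l))"
  have x0: "0 \<le> x" "x \<le> 1" using x by auto
  have a01: "0 \<le> x ^ l" "x ^ l \<le> 1" for l using x0 by (auto simp: power_le_one)
  have p01: "0 \<le> p l" "p l \<le> x ^ l" "p l \<le> 1/2" for l
  proof -
    show "0 \<le> p l" unfolding p_def using a01[of l] by simp
    show "p l \<le> x ^ l" unfolding p_def using div_le1[of "x ^ l" "1 + x ^ l"] a01[of l] by simp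
    show "p l \<le> 1/2" unfolding p_def using a01[of l] by (simp add: field_simps)
  qed
  have t01: "0 \<le> t l" "t l \<le> 1" for l unfolding t_def using t_props[OF a01] by auto
  let ?P = "\<lambda>l. p l * (1 + t l)"
  have P0: "0 \<le> ?P l" for l using p01 t01 by simp
  have P2: "?P l \<le> 2 * x ^ l" for l
  proof -
    have "?P l \<le> x ^ l * 2" using p01[of l] t01[of l] by (intro mult_mono) auto
    then show ?thesis by simp
  qed
  have trm: "c * (real l * ?P l) - c^2 * (real l ^ 2 * (2 * x ^ l)) \<le> tm x y m l" for l
  proof -
    have y': "y = exp (- c)" unfolding y c_def q_def by simp
    have "(c * real l - (c * real l)^2) * ?P l \<le> tm x y m l"
      using tm_lower_G1[OF x0 m c0 y', of l] unfolding p_def t_def by simp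
    moreover have "c^2 * (real l ^ 2 * ?P l) \<le> c^2 * (real l ^ 2 * (2 * x ^ l))"
      using P2[of l] by (intro mult_left_mono) auto
    ultimately show ?thesis by (simp add: algebra_simps power2_eq_square)
  qed
  have sum1: "c * (\<Sum>l\<in>{1..N}. real l * ?P l) - c^2 * (2 * (\<Sum>l\<in>{1..N}. real l ^ 2 * x ^ l)) \<le> (\<Sum>l\<in>{1..N}. tm x y m l)"
  proof -
    have "(\<Sum>l\<in>{1..N}. c * (real l * ?P l) - c^2 * (real l ^ 2 * (2 * x ^ l))) \<le> (\<Sum>l\<in>{1..N}. tm x y m l)"
      by (rule sum_mono) (rule trm)
    then show ?thesis by (simp add: sum_subtractf sum_distrib_left mult_ac)
  qed
  have inv: "1 / (1 - x) \<le> 10 * q"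
  proof -
    have "0 < 1 - x" using x by simp
    then show ?thesis using gap q1 unfolding q_def[symmetric] by (simp add: field_simps)
  qed
  have sq: "(\<Sum>l\<in>{1..N}. real l ^ 2 * x ^ l) \<le> 32000 * q^3"
  proof -
    have "(\<Sum>l\<in>{1..N}. real l ^ 2 * x ^ l) \<le> 32 / (1 - x)^3" by (rule sum_l2x) (use x in auto)
    also have "\<dots> = 32 * (1 / (1 - x))^3" by (simp add: power_divide)
    also have "\<dots> \<le> 32 * (10 * q)^3" using inv x by (intro mult_left_mono power_mono) auto
    finally show ?thesis by (simp add: power_mult_distrib)
  qed
  have sec: "real s * (c^2 * (2 * (\<Sum>l\<in>{1..N}. real l ^ 2 * x ^ l))) \<le> 64000 * real s * \<beta>^2 * q"
  proof -
    have "c^2 * (2 * (\<Sum>l\<in>{1..N}. real l ^ 2 * x ^ l)) \<le> c^2 * (2 * (32000 * q^3))"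
      using sq by (intro mult_left_mono) auto
    also have "\<dots> = 64000 * \<beta>^2 * q" unfolding c_def using q1 by (simp add: field_simps power2_eq_square power3_eq_cube)
    finally show ?thesis using s by (simp add: mult_left_mono mult.assoc)
  qed
  define T where "T = q / (2 * sqrt (real s))"
  have T1: "1 \<le> T"
  proof -
    have "2 * sqrt (real s) \<le> q" unfolding q_def
    proof -
      have "sqrt (4 * real s) \<le> sqrt (real N)" using N by simp
      then show "2 * sqrt (real s) \<le> sqrt (real N)" by (simp add: real_sqrt_mult)
    qed
    then show ?thesis unfolding T_def using s by simp
  qed
  have TT: "real s * (T * T) = real N / 4"
    unfolding T_def using s qq by (simp add: field_simps)
  have tlow: "tau s \<le> t l" if "T \<le> real l" for l
  proof -
    have "x ^ l \<le> exp (- (1 - x) * real l)" by (rule pow_exp_bound) (use x in simp)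
    also have "\<dots> \<le> exp (- (1 / (2 * sqrt (real s))) / 10)"
    proof -
      have "(1 / (10 * q)) * T \<le> (1 - x) * real l"
        using gap that q1 x unfolding q_def[symmetric] by (intro mult_mono) (auto simp: T_def)
      moreover have "(1 / (10 * q)) * T = (1 / (2 * sqrt (real s))) / 10" unfolding T_def using q1 by simp
      ultimately have h: "(1 / (2 * sqrt (real s))) / 10 \<le> (1 - x) * real l" by simp
      have "- (1 - x) * real l = - ((1 - x) * real l)" by (simp add: algebra_simps)
      then have "- (1 - x) * real l \<le> - (1 / (2 * sqrt (real s))) / 10" using h by linarith
      then show ?thesis by simp
    qed
    finally have a: "x ^ l \<le> exp (- (1 / (2 * sqrt (real s))) / 10)" .
    have "(1 - x ^ l) / 2 \<le> t l" unfolding t_def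
      using divide_left_mono[of "1 + x ^ l" 2 "1 - x ^ l"] a01[of l] by simp
    moreover have g: "\<And>A B C::real. (1 - A) / 2 \<le> C \<Longrightarrow> A \<le> B \<Longrightarrow> (1 - B) / 2 \<le> C" by (auto simp: field_simps)
    ultimately show ?thesis unfolding tau_def using a by blast
  qed
  have tau0: "0 < tau s" "tau s \<le> 1/2" using tau_pos[OF s] by auto
  have pt: "tau s * (real l * p l) - tau s / 2 * (if real l < T then real l else 0) \<le> real l * p l * t l" for l
  proof (cases "real l < T")
    case True
    have "tau s * (real l * p l) \<le> tau s / 2 * real l"
      using p01[of l] tau0 by (simp add: mult_left_mono mult.commute mult.left_commute)
    moreover have "0 \<le> real l * p l * t l" using p01 t01 by simp
    ultimately show ?thesis using True by simp
  next
    case False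
    have "tau s * (real l * p l) \<le> t l * (real l * p l)"
      using tlow[of l] False p01 by (intro mult_right_mono) auto
    then show ?thesis using False by (simp add: mult_ac)
  qed
  have ms_eq: "ms x (U s N) = real s * (\<Sum>l\<in>{1..N}. real l * p l)"
    unfolding ms_U p_def by (simp add: mult.assoc)
  have spt: "tau s * (ms x (U s N) - real N / 8) \<le> real s * (\<Sum>l\<in>{1..N}. real l * p l * t l)"
  proof -
    have "(\<Sum>l\<in>{1..N}. tau s * (real l * p l) - tau s / 2 * (if real l < T then real l else 0)) \<le> (\<Sum>l\<in>{1..N}. real l * p l * t l)"
      by (rule sum_mono) (rule pt)
    then have "tau s * (\<Sum>l\<in>{1..N}. real l * p l) - tau s / 2 * (\<Sum>l\<in>{1..N}. if real l < T then real l else 0) \<le> (\<Sum>l\<in>{1..N}. real l * p l * t l)"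
      by (simp add: sum_subtractf sum_distrib_left)
    moreover have "tau s / 2 * (\<Sum>l\<in>{1..N}. if real l < T then real l else 0) \<le> tau s / 2 * (T * T)"
      using small_sum[OF T1] tau0 by (intro mult_left_mono) auto
    ultimately have h: "tau s * (\<Sum>l\<in>{1..N}. real l * p l) - tau s / 2 * (T * T) \<le> (\<Sum>l\<in>{1..N}. real l * p l * t l)"
      by linarith
    have "real s * (tau s * (\<Sum>l\<in>{1..N}. real l * p l) - tau s / 2 * (T * T)) \<le> real s * (\<Sum>l\<in>{1..N}. real l * p l * t l)"
      using h by (intro mult_left_mono) auto
    moreover have "real s * (tau s * (\<Sum>l\<in>{1..N}. real l * p l) - tau s / 2 * (T * T)) = tau s * (ms x (U s N) - real N / 8)"
      unfolding ms_eq using TT by (simp add: algebra_simps)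
    ultimately show ?thesis by simp
  qed
  have first: "ms x (U s N) * (1 + tau s / 2) \<le> real s * (\<Sum>l\<in>{1..N}. real l * ?P l)"
  proof -
    have "real s * (\<Sum>l\<in>{1..N}. real l * ?P l) = ms x (U s N) + real s * (\<Sum>l\<in>{1..N}. real l * p l * t l)"
      unfolding ms_eq by (simp add: algebra_simps sum.distrib)
    moreover have "real N / 2 \<le> ms x (U s N)" using hm M by simp
    moreover have "tau s * (ms x (U s N) / 2) \<le> tau s * (ms x (U s N) - real N / 8)"
      using \<open>real N / 2 \<le> ms x (U s N)\<close> tau0 by (intro mult_left_mono) auto
    moreover have "ms x (U s N) * (1 + tau s / 2) = ms x (U s N) + tau s * (ms x (U s N) / 2)"
      by (simp add: algebra_simps)
    ultimately show ?thesis using spt by linarith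
  qed
  have "\<beta> * q * (1 + tau s / 2) - \<beta> * M / q \<le> c * (ms x (U s N) * (1 + tau s / 2))"
  proof -
    have "c * (ms x (U s N) * (1 + tau s / 2)) = \<beta> * q * (1 + tau s / 2) - (\<beta> / q) * (M / 2) * (1 + tau s / 2)"
      unfolding c_def hm qq[symmetric] using q1 by (simp add: field_simps)
    moreover have "(\<beta> / q) * (M / 2) * (1 + tau s / 2) \<le> \<beta> * M / q"
    proof -
      have "0 \<le> \<beta> / q * M" using b M q1 by simp
      then have "(\<beta> / q * M) * ((1 + tau s / 2) / 2) \<le> (\<beta> / q * M) * 1"
        using tau0 by (intro mult_left_mono) auto
      then show ?thesis by simp
    qed
    ultimately show ?thesis by linarith
  qed
  also have "\<dots> \<le> c * (real s * (\<Sum>l\<in>{1..N}. real l * ?P l))" using first c0 by (intro mult_left_mono) auto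
  finally have F: "\<beta> * q * (1 + tau s / 2) - \<beta> * M / q \<le> real s * (c * (\<Sum>l\<in>{1..N}. real l * ?P l))"
    by (simp add: mult_ac)
  have "real s * (c * (\<Sum>l\<in>{1..N}. real l * ?P l)) - real s * (c^2 * (2 * (\<Sum>l\<in>{1..N}. real l ^ 2 * x ^ l)))
        \<le> real s * (\<Sum>l\<in>{1..N}. tm x y m l)"
    using sum1 s by (simp add: right_diff_distrib[symmetric] mult_left_mono)
  then show ?thesis using F sec unfolding q_def by linarith
qed


lemma x_exp_lower:
  fixes x :: real
  assumes "1/2 \<le> x" "x \<le> 1"
  shows "exp (- 2 * (1 - x)) \<le> x"
proof -
  have xp: "0 < x" using assms by simp
  have "ln (1 / x) \<le> 1 / x - 1" using xp by (intro ln_le_minus_one) simp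
  then have "- ln x \<le> (1 - x) / x" using xp by (simp add: ln_div field_simps)
  also have "\<dots> \<le> 2 * (1 - x)"
  proof -
    have h: "0 \<le> (1 - x) * (2 * x - 1)" using assms by (intro mult_nonneg_nonneg) auto
    have "1 - x \<le> 2 * (1 - x) * x" using h by (simp add: algebra_simps)
    then show ?thesis using xp by (simp add: pos_divide_le_eq)
  qed
  finally have "- 2 * (1 - x) \<le> ln x" by simp
  then have "exp (- 2 * (1 - x)) \<le> exp (ln x)" by simp
  then show ?thesis using xp by simp
qed

lemma card_range:
  fixes a b :: real
  assumes "1 \<le> a" "b \<le> real N"
  shows "b - a - 1 \<le> real (card {l\<in>{1..N}. a \<le> real l \<and> real l \<le> b})"
proof (cases "a \<le> b")
  case False then show ?thesis by simp
next
  case True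
  define A where "A = nat \<lceil>a\<rceil>"
  define B where "B = nat \<lfloor>b\<rfloor>"
  have AB: "{A..B} \<subseteq> {l\<in>{1..N}. a \<le> real l \<and> real l \<le> b}"
  proof
    fix l assume "l \<in> {A..B}"
    then have "A \<le> l" "l \<le> B" by auto
    then have "a \<le> real l" "real l \<le> b" unfolding A_def B_def using assms True by linarith+
    moreover have "1 \<le> l" "l \<le> N" using \<open>a \<le> real l\<close> \<open>real l \<le> b\<close> assms by linarith+
    ultimately show "l \<in> {l\<in>{1..N}. a \<le> real l \<and> real l \<le> b}" by auto
  qed
  have "card {A..B} \<le> card {l\<in>{1..N}. a \<le> real l \<and> real l \<le> b}"
    by (rule card_mono[OF _ AB]) simp
  moreover have "b - a - 1 \<le> real (card {A..B})"
    unfolding A_def B_def using assms True by simp linarith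
  ultimately show ?thesis by linarith
qed

definition lam :: "nat \<Rightarrow> real" where "lam s = 2 * sqrt (8 * real s)"

lemma G2_sum:
  assumes s: "1 \<le> s" and N: "1 \<le> N" and x: "1/2 \<le> x" "x < 1"
    and up: "1 - x \<le> sqrt (8 * real s / real N)" and m: "2 \<le> m" "m \<le> N"
    and y: "y = exp (- (1 / sqrt (real N)))"
  shows "(ln (real m) / (2 * lam s) * sqrt (real N) - sqrt (real N) - 1) / 8 \<le> real s * (\<Sum>l\<in>{1..N}. tm x y m l)"
proof -
  define q where "q = sqrt (real N)"
  have q1: "1 \<le> q" unfolding q_def using N by simp
  have qq: "q * q = real N" unfolding q_def by simp
  define K2 where "K2 = ln (real m) / (2 * lam s)"
  have lam1: "1 \<le> lam s" unfolding lam_def using s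
    by (smt (verit, best) mult_le_cancel_left1 of_nat_1 of_nat_le_iff real_sqrt_ge_1_iff)
  have x0: "0 \<le> x" "x \<le> 1" using x by auto
  have e1: "exp (-1::real) \<le> 1/2"
  proof -
    have "2 \<le> exp (1::real)" using exp_ge_add_one_self[of 1] by simp
    then show ?thesis by (simp add: exp_minus field_simps)
  qed
  have good: "1/8 \<le> tm x y m l" if l: "q \<le> real l" "real l \<le> K2 * q" for l
  proof -
    let ?a = "x ^ l" let ?t = "(1 - x ^ l) / (1 + x ^ l)"
    have a01: "0 \<le> ?a" "?a \<le> 1" using x0 by (auto simp: power_le_one)
    have yl: "y ^ l = exp (- (real l / q))" unfolding y q_def by (simp add: exp_of_nat_mult[symmetric] mult.commute)
    have "exp (- (real l / q)) \<le> exp (-1)" using l q1 by simp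
    then have "exp (- (real l / q)) \<le> 1/2" using e1 by linarith
    then have b: "1/2 \<le> 1 - y ^ l" using yl by simp
    have "exp (- 2 * (1 - x)) ^ l \<le> ?a" using x_exp_lower[OF x(1) x0(2)] by (intro power_mono) auto
    then have alow: "exp (- 2 * (1 - x) * real l) \<le> ?a" by (simp add: exp_of_nat_mult[symmetric] mult.commute)
    have "2 * (1 - x) * real l \<le> 2 * sqrt (8 * real s / real N) * (K2 * q)"
      using up l x q1 by (intro mult_mono) auto
    also have "\<dots> = lam s * K2"
      unfolding lam_def q_def using N by (simp add: real_sqrt_divide field_simps)
    also have "\<dots> = ln (real m) / 2" unfolding K2_def using lam1 by simp
    finally have h1: "2 * (1 - x) * real l \<le> ln (real m) / 2" .
    have "- 2 * (1 - x) * real l = - (2 * (1 - x) * real l)" by (simp add: algebra_simps)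
    then have "- (ln (real m) / 2) \<le> - 2 * (1 - x) * real l" using h1 by linarith
    then have "exp (- (ln (real m) / 2)) \<le> exp (- 2 * (1 - x) * real l)" by simp
    then have al: "exp (- (ln (real m) / 2)) \<le> ?a" using alow by linarith
    have mpos: "0 < real m" using m by simp
    have "1 \<le> exp (ln (real m) / 2)" using m by simp
    also have "exp (ln (real m) / 2) = real m * exp (- (ln (real m) / 2))"
    proof -
      have "real m * exp (- (ln (real m) / 2)) = exp (ln (real m)) * exp (- (ln (real m) / 2))" using mpos by simp
      also have "\<dots> = exp (ln (real m) + - (ln (real m) / 2))" by (rule exp_add[symmetric])
      also have "ln (real m) + - (ln (real m) / 2) = ln (real m) / 2" by simp
      finally show ?thesis by simp
    qed
    also have "\<dots> \<le> real m * ?a" using al mpos by (intro mult_left_mono) auto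
    finally have ma: "1 \<le> real m * ?a" .
    have "?t ^ m \<le> (1 - ?a) ^ m" using t_props[OF a01] by (intro power_mono) auto
    also have "\<dots> \<le> exp (- ?a) ^ m" using a01 exp_ge_add_one_self[of "- ?a"] by (intro power_mono) auto
    also have "\<dots> = exp (- (real m * ?a))" by (simp add: exp_of_nat_mult[symmetric])
    also have "\<dots> \<le> exp (-1)" using ma by simp
    finally have "?t ^ m \<le> 1/2" using e1 by linarith
    then have c: "1/2 \<le> 1 - ?t ^ m" by simp
    have "(1/2) * (1/2) \<le> (1 - y ^ l) * (1 - ?t ^ m)" using b c by (intro mult_mono) auto
    then show ?thesis unfolding tm_def by simp
  qed
  have K2N: "K2 * q \<le> real N"
  proof -
    have "ln (real m) \<le> ln (real N)" using m by simp
    also have "ln (real N) = 2 * ln q" unfolding q_def using N by (simp add: ln_sqrt)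
    also have "\<dots> \<le> 2 * q" using q1 ln_le_minus_one[of q] by simp
    finally have "K2 \<le> 2 * q / (2 * lam s)" unfolding K2_def using lam1 by (intro divide_right_mono) auto
    also have "\<dots> \<le> q" using lam1 q1 by (simp add: field_simps)
    finally show ?thesis using qq q1 by (smt (verit) mult_right_mono)
  qed
  define S' where "S' = {l\<in>{1..N}. q \<le> real l \<and> real l \<le> K2 * q}"
  have cS: "K2 * q - q - 1 \<le> real (card S')" unfolding S'_def by (rule card_range[OF q1 K2N])
  have tm_nn: "0 \<le> tm x y m l" for l using tm_props[of x y m l] x0 y by auto
  have "real (card S') / 8 = (\<Sum>l\<in>S'. 1/8)" by simp
  also have "\<dots> \<le> (\<Sum>l\<in>S'. tm x y m l)" by (rule sum_mono) (use good in \<open>auto simp: S'_def\<close>)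
  also have "\<dots> \<le> (\<Sum>l\<in>{1..N}. tm x y m l)" by (rule sum_mono2) (auto simp: S'_def tm_nn)
  also have "\<dots> \<le> real s * (\<Sum>l\<in>{1..N}. tm x y m l)"
  proof -
    have "0 \<le> (\<Sum>l\<in>{1..N}. tm x y m l)" using tm_nn by (intro sum_nonneg) auto
    then show ?thesis using s mult_right_mono[of 1 "real s"] by simp
  qed
  finally show ?thesis using cS unfolding K2_def q_def by simp
qed


lemma loss_bound:
  assumes x: "1/2 \<le> x" "x < 1" and up: "1 - x \<le> sqrt (8 * real s / real N)" and N: "1 \<le> N"
    and c: "0 \<le> c"
  shows "1 / x powr c \<le> exp (c * lam s / sqrt (real N))"
proof -
  have xp: "0 < x" using x by simp
  have "exp (- 2 * (1 - x)) \<le> x" by (rule x_exp_lower) (use x in auto)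
  then have l1: "- 2 * (1 - x) \<le> ln x" using xp by (metis exp_le_cancel_iff exp_ln)
  have "2 * (1 - x) \<le> 2 * sqrt (8 * real s / real N)" using up by simp
  also have "\<dots> = lam s / sqrt (real N)" unfolding lam_def by (simp add: real_sqrt_divide)
  finally have "- (lam s / sqrt (real N)) \<le> ln x" using l1 by linarith
  then have "c * (- (lam s / sqrt (real N))) \<le> c * ln x" using c by (intro mult_left_mono) auto
  then have "exp (- (c * lam s / sqrt (real N))) \<le> x powr c" unfolding powr_def using xp by simp
  then show ?thesis using xp by (simp add: exp_minus field_simps)
qed

lemma pow_tm:
  assumes "0 \<le> x" "x \<le> 1" "0 \<le> y" "y \<le> 1"
  shows "(\<Prod>l\<in>{1..N}. 1 - tm x y m l) ^ s \<le> exp (- (real s * (\<Sum>l\<in>{1..N}. tm x y m l)))"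
proof -
  have p: "(\<Prod>l\<in>{1..N}. 1 - tm x y m l) \<le> exp (- (\<Sum>l\<in>{1..N}. tm x y m l))"
    by (rule prod_exp_bound) (use tm_props[OF assms] in auto)
  have "0 \<le> (\<Prod>l\<in>{1..N}. 1 - tm x y m l)" using tm_props[OF assms] by (intro prod_nonneg) auto
  then have "(\<Prod>l\<in>{1..N}. 1 - tm x y m l) ^ s \<le> exp (- (\<Sum>l\<in>{1..N}. tm x y m l)) ^ s"
    using p by (intro power_mono) auto
  also have "\<dots> = exp (- (real s * (\<Sum>l\<in>{1..N}. tm x y m l)))"
    by (simp add: exp_of_nat_mult[symmetric])
  finally show ?thesis .
qed

lemma setup_N:
  assumes s: "1 \<le> s" and N: "25 \<le> N" "32 * real s \<le> real N" and M: "0 < M" "M \<le> real N"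
    and MV: "32000 * real s * (real N * sqrt (real N)) \<le> M^2 / 8"
  shows "\<exists>x. 1/2 \<le> x \<and> x < 1 \<and> ms x (U s N) = real N - M / 2 \<and>
             1 / (10 * sqrt (real N)) \<le> 1 - x \<and> 1 - x \<le> sqrt (8 * real s / real N) \<and>
             (\<forall>m r y. 2 \<le> m \<longrightarrow> m \<le> r \<longrightarrow> 0 < y \<longrightarrow> y \<le> 1 \<longrightarrow>
                xor_prob s N r \<le> 4 ^ m * exp (real m * M * lam s / sqrt (real N)) *
                   exp (- (real s * (\<Sum>l\<in>{1..N}. tm x y m l))) / y ^ N)"
proof -
  obtain x where x: "1/2 \<le> x" "x < 1" and hm: "ms x (U s N) = real N - M / 2"
    and gap: "1 / (10 * sqrt (real N)) \<le> 1 - x" and up: "1 - x \<le> sqrt (8 * real s / real N)"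
    using choose_x[OF s N M] by blast
  have N1: "1 \<le> N" "1 \<le> s" using N s by auto
  have hv: "Vs x (U s N) \<le> M^2 / 8"
  proof -
    have a: "Vs x (U s N) \<le> real s * (32 / (1 - x)^3)" by (rule Vs_upper) (use x in auto)
    have i: "1 / (1 - x) \<le> 10 * sqrt (real N)"
    proof -
      have "0 < 1 - x" using x by simp
      then show ?thesis using gap N by (simp add: field_simps)
    qed
    have "(1 / (1 - x))^3 \<le> (10 * sqrt (real N))^3" using i x by (intro power_mono) auto
    also have "(10 * sqrt (real N))^3 = 1000 * (real N * sqrt (real N))"
      by (simp add: power3_eq_cube power_mult_distrib)
    finally have "32 * (1 / (1 - x))^3 \<le> 32 * (1000 * (real N * sqrt (real N)))" by simp
    moreover have "32 / (1 - x)^3 = 32 * (1 / (1 - x))^3" by (simp add: power_divide)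
    ultimately have b: "32 / (1 - x)^3 \<le> 32000 * (real N * sqrt (real N))" by simp
    have "real s * (32 / (1 - x)^3) \<le> real s * (32000 * (real N * sqrt (real N)))"
      using b by (intro mult_left_mono) auto
    then show ?thesis using a MV by simp
  qed
  have main: "xor_prob s N r \<le> 4 ^ m * exp (real m * M * lam s / sqrt (real N)) *
                   exp (- (real s * (\<Sum>l\<in>{1..N}. tm x y m l))) / y ^ N"
    if m: "2 \<le> m" "m \<le> r" and y: "0 < y" "y \<le> 1" for m r y
  proof -
    have xx: "0 < x" "x < 1" using x by auto
    have "xor_prob s N r \<le> 4 ^ m / (y ^ N * x powr (real m * M)) *
           (\<Prod>l\<in>{1..N}. 1 - (1 - y^l) * (1 - ((1 - x^l)/(1 + x^l))^m) / 2) ^ s"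
      by (rule master[OF N1(2) N1(1) xx y M(1) hm hv _ m(2)]) (use m in simp)
    also have "(\<Prod>l\<in>{1..N}. 1 - (1 - y^l) * (1 - ((1 - x^l)/(1 + x^l))^m) / 2) = (\<Prod>l\<in>{1..N}. 1 - tm x y m l)"
      unfolding tm_def by simp
    also have "4 ^ m / (y ^ N * x powr (real m * M)) * (\<Prod>l\<in>{1..N}. 1 - tm x y m l) ^ s
        = (4 ^ m / y ^ N) * (1 / x powr (real m * M)) * (\<Prod>l\<in>{1..N}. 1 - tm x y m l) ^ s"
      by simp
    also have "\<dots> \<le> (4 ^ m / y ^ N) * exp (real m * M * lam s / sqrt (real N)) * exp (- (real s * (\<Sum>l\<in>{1..N}. tm x y m l)))"
    proof (intro mult_mono)
      show "1 / x powr (real m * M) \<le> exp (real m * M * lam s / sqrt (real N))"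
        by (rule loss_bound[OF x up N1(1)]) (use M in simp)
      show "(\<Prod>l\<in>{1..N}. 1 - tm x y m l) ^ s \<le> exp (- (real s * (\<Sum>l\<in>{1..N}. tm x y m l)))"
        by (rule pow_tm) (use x y in auto)
      show "0 \<le> (\<Prod>l\<in>{1..N}. 1 - tm x y m l) ^ s"
        using tm_props[of x y m] x y by (intro zero_le_power prod_nonneg) auto
    qed (use y in auto)
    also have "\<dots> = 4 ^ m * exp (real m * M * lam s / sqrt (real N)) * exp (- (real s * (\<Sum>l\<in>{1..N}. tm x y m l))) / y ^ N"
      by simp
    finally show ?thesis .
  qed
  show ?thesis using x hm gap up main by blast
qed


lemma xor_prob_le1: "xor_prob s N r \<le> 1"
proof -
  let ?P = "PiE {..<r} (\<lambda>_. QN s N)"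
  have fin: "finite ?P" using finite_QN by (simp add: finite_PiE)
  have "card {ks \<in> ?P. xsum s ks r \<in> QN s N} \<le> card ?P" by (rule card_mono[OF fin]) auto
  also have "card ?P = card (QN s N) ^ r" by (simp add: card_PiE)
  finally have h0: "card {ks \<in> ?P. xsum s ks r \<in> QN s N} \<le> card (QN s N) ^ r" .
  have h: "real (card {ks \<in> ?P. xsum s ks r \<in> QN s N}) \<le> real (card (QN s N)) ^ r"
    using h0 unfolding of_nat_power[symmetric] of_nat_le_iff .
  have g: "\<And>a b::real. a \<le> b \<Longrightarrow> 0 \<le> b \<Longrightarrow> a / b \<le> 1"
    by (metis div_by_0 divide_le_eq_1 le_less zero_le_one)
  show ?thesis unfolding xor_prob_def by (rule g[OF h]) simp
qed

lemma ln_le_2sqrt: "1 \<le> r \<Longrightarrow> ln (real r) \<le> 2 * sqrt (real r)"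
proof -
  assume r: "1 \<le> r"
  have "ln (real r) = 2 * ln (sqrt (real r))" using r by (simp add: ln_sqrt)
  also have "\<dots> \<le> 2 * (sqrt (real r) - 1)" using r ln_le_minus_one[of "sqrt (real r)"] by simp
  finally show ?thesis by simp
qed


lemma yN: "0 \<le> c \<Longrightarrow> 1 \<le> N \<Longrightarrow> exp (- (c / sqrt (real N))) ^ N = exp (- (c * sqrt (real N)))"
proof -
  assume N: "1 \<le> N"
  have "exp (- (c / sqrt (real N))) ^ N = exp (real N * (- (c / sqrt (real N))))" by (rule exp_of_nat_mult[symmetric])
  also have "real N * (- (c / sqrt (real N))) = - (c * sqrt (real N))"
  proof -
    have d: "real N / sqrt (real N) = sqrt (real N)" by (rule real_div_sqrt) simp
    have "real N * (- (c / sqrt (real N))) = - (c * (real N / sqrt (real N)))" by simp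
    then show ?thesis unfolding d .
  qed
  finally show ?thesis .
qed

lemma four_pow: "(4::real) ^ m = exp (real m * ln 4)"
proof -
  have "exp (real m * ln 4) = exp (ln 4) ^ m" by (rule exp_of_nat_mult)
  then show ?thesis by simp
qed

lemma exp_comb: "exp u * exp v * exp (- w) / exp (- z) = exp (u + v - w + (z::real))"
  by (simp add: exp_add exp_diff exp_minus field_simps)

lemma case_G1:
  assumes s: "1 \<le> s" and N: "1 \<le> N" "4 * real s \<le> real N" and x: "1/2 \<le> x" "x < 1"
    and gap: "1 / (10 * sqrt (real N)) \<le> 1 - x" and hm: "ms x (U s N) = real N - M / 2"
    and M: "0 \<le> M" "M \<le> real N"
    and main: "\<forall>m r y. 2 \<le> m \<longrightarrow> m \<le> r \<longrightarrow> 0 < y \<longrightarrow> y \<le> 1 \<longrightarrow>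
                xor_prob s N r \<le> 4 ^ m * exp (real m * M * lam s / sqrt (real N)) *
                   exp (- (real s * (\<Sum>l\<in>{1..N}. tm x y m l))) / y ^ N"
    and r: "2 \<le> r"
  shows "xor_prob s N r \<le> exp (real r * ln 4 + real r * M * lam s / sqrt (real N)
           - (tau s / (256000 * real s)) * tau s * sqrt (real N) / 4 + (tau s / (256000 * real s)) * M / sqrt (real N))"
proof -
  define \<beta> where "\<beta> = tau s / (256000 * real s)"
  have b0: "0 \<le> \<beta>" unfolding \<beta>_def using tau_pos[OF s] by simp
  define y where "y = exp (- (\<beta> / sqrt (real N)))"
  have y: "0 < y" "y \<le> 1" unfolding y_def using b0 N by auto
  have h1: "xor_prob s N r \<le> 4 ^ r * exp (real r * M * lam s / sqrt (real N)) *
                   exp (- (real s * (\<Sum>l\<in>{1..N}. tm x y r l))) / y ^ N"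
    using main r y by auto
  have G: "\<beta> * sqrt (real N) * (1 + tau s / 2) - \<beta> * M / sqrt (real N) - 64000 * real s * \<beta>^2 * sqrt (real N)
         \<le> real s * (\<Sum>l\<in>{1..N}. tm x y r l)"
    by (rule G1_sum[OF s N(2) N(1) x gap hm M r b0 y_def])
  have bb: "64000 * real s * \<beta>^2 = \<beta> * tau s / 4" unfolding \<beta>_def using s by (simp add: power2_eq_square field_simps)
  have yn: "y ^ N = exp (- (\<beta> * sqrt (real N)))" unfolding y_def by (rule yN[OF b0 N(1)])
  have "4 ^ r * exp (real r * M * lam s / sqrt (real N)) * exp (- (real s * (\<Sum>l\<in>{1..N}. tm x y r l))) / y ^ N
      = exp (real r * ln 4 + real r * M * lam s / sqrt (real N) - real s * (\<Sum>l\<in>{1..N}. tm x y r l) + \<beta> * sqrt (real N))"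
    unfolding yn four_pow by (rule exp_comb)
  also have "\<dots> \<le> exp (real r * ln 4 + real r * M * lam s / sqrt (real N) - \<beta> * tau s * sqrt (real N) / 4 + \<beta> * M / sqrt (real N))"
  proof -
    have e1: "\<beta> * sqrt (real N) * (1 + tau s / 2) = \<beta> * sqrt (real N) + 2 * (\<beta> * tau s * sqrt (real N) / 4)" by (simp add: algebra_simps)
    have e2: "64000 * real s * \<beta>^2 * sqrt (real N) = \<beta> * tau s * sqrt (real N) / 4" using bb by simp
    have "- real s * (\<Sum>l\<in>{1..N}. tm x y r l) + \<beta> * sqrt (real N) \<le> - (\<beta> * tau s * sqrt (real N) / 4) + \<beta> * M / sqrt (real N)"
      using G e1 e2 by linarith
    then show ?thesis by (subst exp_le_cancel_iff) linarith
  qed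
  finally show ?thesis using h1 unfolding \<beta>_def by simp
qed

lemma case_G2:
  assumes s: "1 \<le> s" and N: "1 \<le> N" and x: "1/2 \<le> x" "x < 1"
    and up: "1 - x \<le> sqrt (8 * real s / real N)"
    and main: "\<forall>m r y. 2 \<le> m \<longrightarrow> m \<le> r \<longrightarrow> 0 < y \<longrightarrow> y \<le> 1 \<longrightarrow>
                xor_prob s N r \<le> 4 ^ m * exp (real m * M * lam s / sqrt (real N)) *
                   exp (- (real s * (\<Sum>l\<in>{1..N}. tm x y m l))) / y ^ N"
    and m: "2 \<le> m" "m \<le> r" "m \<le> N"
  shows "xor_prob s N r \<le> exp (real m * ln 4 + real m * M * lam s / sqrt (real N) + 9 / 8 * sqrt (real N) + 1 / 8
           - ln (real m) * sqrt (real N) / (16 * lam s))"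
proof -
  define y where "y = exp (- (1 / sqrt (real N)))"
  have y: "0 < y" "y \<le> 1" unfolding y_def using N by auto
  have h1: "xor_prob s N r \<le> 4 ^ m * exp (real m * M * lam s / sqrt (real N)) *
                   exp (- (real s * (\<Sum>l\<in>{1..N}. tm x y m l))) / y ^ N"
    using main m y by auto
  have G: "(ln (real m) / (2 * lam s) * sqrt (real N) - sqrt (real N) - 1) / 8 \<le> real s * (\<Sum>l\<in>{1..N}. tm x y m l)"
    by (rule G2_sum[OF s N x up m(1) m(3) y_def])
  have yn: "y ^ N = exp (- sqrt (real N))" unfolding y_def using yN[of 1 N] N by simp
  have "4 ^ m * exp (real m * M * lam s / sqrt (real N)) * exp (- (real s * (\<Sum>l\<in>{1..N}. tm x y m l))) / y ^ N
      = exp (real m * ln 4 + real m * M * lam s / sqrt (real N) - real s * (\<Sum>l\<in>{1..N}. tm x y m l) + sqrt (real N))"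
    unfolding yn four_pow by (rule exp_comb)
  also have "\<dots> \<le> exp (real m * ln 4 + real m * M * lam s / sqrt (real N) + 9 / 8 * sqrt (real N) + 1 / 8
           - ln (real m) * sqrt (real N) / (16 * lam s))"
  proof -
    have "(ln (real m) / (2 * lam s) * sqrt (real N) - sqrt (real N) - 1) / 8
        = ln (real m) * sqrt (real N) / (16 * lam s) - sqrt (real N) / 8 - 1 / 8" by (simp add: field_simps)
    then have "- (real s * (\<Sum>l\<in>{1..N}. tm x y m l)) + sqrt (real N) \<le> 9 / 8 * sqrt (real N) + 1 / 8 - ln (real m) * sqrt (real N) / (16 * lam s)"
      using G by linarith
    then show ?thesis by (subst exp_le_cancel_iff) linarith
  qed
  finally show ?thesis using h1 by simp
qed


lemma rhs_ge:
  assumes N: "1 \<le> N" and r: "1 \<le> r" and c: "0 \<le> c"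
  shows "exp (real r * c - B * sqrt (real N) * ln (real r)) \<le> exp c ^ r * real N powr (real r / 4) * real r powr (- B * sqrt (real N))"
proof -
  have "exp c ^ r = exp (real r * c)" by (simp add: exp_of_nat_mult[symmetric])
  moreover have "real r powr (- B * sqrt (real N)) = exp (- B * sqrt (real N) * ln (real r))"
    using r by (simp add: powr_def)
  moreover have "1 \<le> real N powr (real r / 4)" using N by (simp add: ge_one_powr_ge_zero)
  ultimately have "exp c ^ r * real N powr (real r / 4) * real r powr (- B * sqrt (real N))
      \<ge> exp (real r * c) * exp (- B * sqrt (real N) * ln (real r))"
    by (simp add: mult_right_mono mult_le_cancel_left1)
  also have "exp (real r * c) * exp (- B * sqrt (real N) * ln (real r)) = exp (real r * c - B * sqrt (real N) * ln (real r))"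
    by (simp add: exp_add[symmetric])
  finally show ?thesis .
qed

lemma lam_ge1: "1 \<le> s \<Longrightarrow> 1 \<le> lam s"
  unfolding lam_def by (smt (verit, best) mult_le_cancel_left1 of_nat_1 of_nat_le_iff real_sqrt_ge_1_iff)


lemma ev_all:
  fixes K la be ta m0 s :: real
  assumes "0 < K" "0 < la" "0 < be" "0 < ta" "0 < m0" "0 < s"
  shows "eventually (\<lambda>N::nat. 25 \<le> real N \<and> 32 * s \<le> real N \<and>
     K * sqrt (real N * sqrt (real N)) \<le> real N \<and>
     m0 * ln 4 + m0 * (K * la) * sqrt (sqrt (real N)) + be * K * sqrt (sqrt (real N)) \<le> be * ta * sqrt (real N) / 8 \<and>
     real N powr (1/8) * (K * la * sqrt (sqrt (real N)) + ln 4) \<le> sqrt (real N) / (64 * la) \<and>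
     m0 + 1 \<le> real N powr (1/8) \<and> real N powr (1/16) + 1 \<le> real N powr (1/8)) at_top"
proof -
  have e1: "eventually (\<lambda>N::nat. 25 \<le> real N) at_top" by real_asymp
  have e2: "eventually (\<lambda>N::nat. 32 * s \<le> real N) at_top" by real_asymp
  have e3: "eventually (\<lambda>N::nat. K * sqrt (real N * sqrt (real N)) \<le> real N) at_top" using assms by real_asymp
  have e4: "eventually (\<lambda>N::nat. m0 * ln 4 + m0 * (K * la) * sqrt (sqrt (real N)) + be * K * sqrt (sqrt (real N)) \<le> be * ta * sqrt (real N) / 8) at_top"
    using assms by real_asymp
  have e5: "eventually (\<lambda>N::nat. real N powr (1/8) * (K * la * sqrt (sqrt (real N)) + ln 4) \<le> sqrt (real N) / (64 * la)) at_top"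
    using assms by real_asymp
  have e6: "eventually (\<lambda>N::nat. m0 + 1 \<le> real N powr (1/8)) at_top" by real_asymp
  have e7: "eventually (\<lambda>N::nat. real N powr (1/16) + 1 \<le> real N powr (1/8)) at_top" by real_asymp
  show ?thesis using e1 e2 e3 e4 e5 e6 e7 by eventually_elim auto
qed

lemma Mf_facts:
  assumes K: "K = sqrt (256000 * real s)" and N: "1 \<le> N"
  shows "K * sqrt (real N * sqrt (real N)) / sqrt (real N) = K * sqrt (sqrt (real N))"
    "32000 * real s * (real N * sqrt (real N)) \<le> (K * sqrt (real N * sqrt (real N)))^2 / 8"
proof -
  have q: "0 < sqrt (real N)" using N by simp
  show "K * sqrt (real N * sqrt (real N)) / sqrt (real N) = K * sqrt (sqrt (real N))"
    using q by (simp add: real_sqrt_mult)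
  have "(K * sqrt (real N * sqrt (real N)))^2 = 256000 * real s * (real N * sqrt (real N))"
    unfolding K using q by (simp add: power_mult_distrib)
  then show "32000 * real s * (real N * sqrt (real N)) \<le> (K * sqrt (real N * sqrt (real N)))^2 / 8" by simp
qed

theorem lemma5_core:
  fixes s :: nat
  assumes "s \<ge> 1"
  shows "\<exists>A B :: real. A > 0 \<and> B > 0 \<and>
           (\<forall>N r :: nat. N \<ge> 1 \<longrightarrow> r \<ge> 2 \<longrightarrow>
              xor_prob s N r \<le> A ^ r * real N powr (real r / 4) * real r powr (- B * sqrt (real N)))"
proof -
  have s: "1 \<le> s" using assms .
  define K where "K = sqrt (256000 * real s)"
  define la where "la = lam s"
  define ta where "ta = tau s"
  define be where "be = ta / (256000 * real s)"
  define m0 :: nat where "m0 = nat \<lceil>exp (36 * la)\<rceil> + 3"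
  have la1: "1 \<le> la" unfolding la_def by (rule lam_ge1[OF s])
  have ta0: "0 < ta" "ta \<le> 1/2" unfolding ta_def using tau_pos[OF s] by auto
  have be0: "0 < be" unfolding be_def using ta0 s by simp
  have K0: "0 < K" unfolding K_def using s by simp
  have m03: "3 \<le> m0" unfolding m0_def by simp
  have lnm0: "36 * la \<le> ln (real m0)"
  proof -
    have "exp (36 * la) \<le> real m0" unfolding m0_def by linarith
    then have "ln (exp (36 * la)) \<le> ln (real m0)" using m03 by (subst ln_le_cancel_iff) auto
    then show ?thesis by simp
  qed
  have lnm0p: "0 < ln (real m0)" using lnm0 la1 by linarith
  define B where "B = min (be * ta / (8 * ln (real m0))) (1 / (1024 * la))"
  have B0: "0 < B" unfolding B_def using be0 ta0 lnm0p la1 by simp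
  have B1: "B * ln (real m0) \<le> be * ta / 8"
  proof -
    have "B \<le> be * ta / (8 * ln (real m0))" unfolding B_def by simp
    then have "B * ln (real m0) \<le> be * ta / (8 * ln (real m0)) * ln (real m0)" using lnm0p by (intro mult_right_mono) auto
    then show ?thesis using lnm0p by simp
  qed
  have B2: "B \<le> 1 / (1024 * la)" unfolding B_def by simp
  have ev: "eventually (\<lambda>N::nat. 25 \<le> real N \<and> 32 * real s \<le> real N \<and>
     K * sqrt (real N * sqrt (real N)) \<le> real N \<and>
     real m0 * ln 4 + real m0 * (K * la) * sqrt (sqrt (real N)) + be * K * sqrt (sqrt (real N)) \<le> be * ta * sqrt (real N) / 8 \<and>
     real N powr (1/8) * (K * la * sqrt (sqrt (real N)) + ln 4) \<le> sqrt (real N) / (64 * la) \<and>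
     real m0 + 1 \<le> real N powr (1/8) \<and> real N powr (1/16) + 1 \<le> real N powr (1/8)) at_top"
    by (rule ev_all) (use K0 la1 be0 ta0 m03 s in auto)
  then obtain N0 where N0: "\<And>N. N \<ge> N0 \<Longrightarrow> 25 \<le> real N \<and> 32 * real s \<le> real N \<and>
     K * sqrt (real N * sqrt (real N)) \<le> real N \<and>
     real m0 * ln 4 + real m0 * (K * la) * sqrt (sqrt (real N)) + be * K * sqrt (sqrt (real N)) \<le> be * ta * sqrt (real N) / 8 \<and>
     real N powr (1/8) * (K * la * sqrt (sqrt (real N)) + ln 4) \<le> sqrt (real N) / (64 * la) \<and>
     real m0 + 1 \<le> real N powr (1/8) \<and> real N powr (1/16) + 1 \<le> real N powr (1/8)"
    unfolding eventually_at_top_linorder by blast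
  define c where "c = 1/8 + 2 * B + B * sqrt (real N0)"
  have c0: "0 \<le> c" unfolding c_def using B0 by simp
  define A where "A = exp c"
  have main: "xor_prob s N r \<le> A ^ r * real N powr (real r / 4) * real r powr (- B * sqrt (real N))"
    if N: "1 \<le> N" and r: "2 \<le> r" for N r
  proof -
    have r1: "1 \<le> r" using r by simp
    have rhs: "exp (real r * c - B * sqrt (real N) * ln (real r)) \<le> A ^ r * real N powr (real r / 4) * real r powr (- B * sqrt (real N))"
      unfolding A_def by (rule rhs_ge[OF N r1 c0])
    have lnr0: "0 \<le> ln (real r)" using r by simp
    show ?thesis
    proof (cases "N < N0 \<or> N \<le> r")
      case True
      have "B * sqrt (real N) * ln (real r) \<le> real r * c"
      proof (cases "N < N0")
        case True
        have "sqrt (real N) \<le> sqrt (real N0)" using True by simp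
        moreover have "ln (real r) \<le> real r" using r ln_le_minus_one[of "real r"] by simp
        ultimately have "sqrt (real N) * ln (real r) \<le> sqrt (real N0) * real r"
          using lnr0 by (intro mult_mono) auto
        then have "B * (sqrt (real N) * ln (real r)) \<le> B * (sqrt (real N0) * real r)" using B0 by (intro mult_left_mono) auto
        moreover have "B * (sqrt (real N0) * real r) \<le> real r * c" unfolding c_def using B0 r by (simp add: algebra_simps)
        ultimately show ?thesis by (simp add: mult.assoc)
      next
        case False
        then have Nr: "N \<le> r" using \<open>N < N0 \<or> N \<le> r\<close> by simp
        have "sqrt (real N) \<le> sqrt (real r)" using Nr by simp
        moreover have "ln (real r) \<le> 2 * sqrt (real r)" by (rule ln_le_2sqrt[OF r1])
        ultimately have "sqrt (real N) * ln (real r) \<le> sqrt (real r) * (2 * sqrt (real r))"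
          using lnr0 by (intro mult_mono) auto
        also have "\<dots> = 2 * real r" by simp
        finally have "B * (sqrt (real N) * ln (real r)) \<le> B * (2 * real r)" using B0 by (intro mult_left_mono) auto
        moreover have "B * (2 * real r) \<le> real r * c" unfolding c_def using B0 r
          by (simp add: algebra_simps)
        ultimately show ?thesis by (simp add: mult.assoc)
      qed
      then have "1 \<le> exp (real r * c - B * sqrt (real N) * ln (real r))" by simp
      then show ?thesis using xor_prob_le1[of s N r] rhs by linarith
    next
      case False
      then have NN0: "N0 \<le> N" and rN: "r < N" by auto
      note P = N0[OF NN0]
      define M where "M = K * sqrt (real N * sqrt (real N))"
      have M0: "0 < M" unfolding M_def using K0 N by simp
      have MN: "M \<le> real N" unfolding M_def using P by simp
      have MfN: "M / sqrt (real N) = K * sqrt (sqrt (real N))" and MV: "32000 * real s * (real N * sqrt (real N)) \<le> M^2 / 8"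
        unfolding M_def using Mf_facts[OF K_def N] by auto
      have N25: "25 \<le> N" using P by simp
      obtain x where x: "1/2 \<le> x" "x < 1" and hm: "ms x (U s N) = real N - M / 2"
        and gap: "1 / (10 * sqrt (real N)) \<le> 1 - x" and up: "1 - x \<le> sqrt (8 * real s / real N)"
        and mainb: "\<forall>m r y. 2 \<le> m \<longrightarrow> m \<le> r \<longrightarrow> 0 < y \<longrightarrow> y \<le> 1 \<longrightarrow>
                xor_prob s N r \<le> 4 ^ m * exp (real m * M * lam s / sqrt (real N)) *
                   exp (- (real s * (\<Sum>l\<in>{1..N}. tm x y m l))) / y ^ N"
        using setup_N[OF s N25 _ M0 MN MV] P by blast
      have sqN: "0 < sqrt (real N)" using N by simp
      have s4: "0 \<le> sqrt (sqrt (real N))" by simp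
      have Aexp: "exp c \<le> A ^ r"
      proof -
        have "A ^ 1 \<le> A ^ r" unfolding A_def using r c0 by (intro power_increasing) auto
        then show ?thesis unfolding A_def by simp
      qed
      show ?thesis
      proof (cases "r < m0")
        case True
        have G: "xor_prob s N r \<le> exp (real r * ln 4 + real r * M * la / sqrt (real N) - be * ta * sqrt (real N) / 4 + be * M / sqrt (real N))"
          using case_G1[OF s N _ x gap hm _ MN mainb r] P M0 unfolding be_def ta_def la_def by simp
        have e1: "real r * M * la / sqrt (real N) = real r * (K * la) * sqrt (sqrt (real N))"
        proof -
          have "real r * M * la / sqrt (real N) = real r * la * (M / sqrt (real N))" by simp
          then show ?thesis unfolding MfN by (simp add: mult_ac)
        qed
        have e2: "be * M / sqrt (real N) = be * K * sqrt (sqrt (real N))"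
        proof -
          have "be * M / sqrt (real N) = be * (M / sqrt (real N))" by simp
          then show ?thesis unfolding MfN by (simp add: mult_ac)
        qed
        have r_le: "real r \<le> real m0" using True by simp
        have "real r * ln 4 + real r * (K * la) * sqrt (sqrt (real N)) \<le> real m0 * ln 4 + real m0 * (K * la) * sqrt (sqrt (real N))"
          using r_le K0 la1 s4 by (intro add_mono mult_right_mono) auto
        then have "real r * ln 4 + real r * M * la / sqrt (real N) - be * ta * sqrt (real N) / 4 + be * M / sqrt (real N)
            \<le> - (be * ta * sqrt (real N) / 8)" using P unfolding e1 e2 by linarith
        also have "\<dots> \<le> - (B * sqrt (real N) * ln (real r))"
        proof -
          have "B * ln (real r) \<le> B * ln (real m0)" using r_le r B0 by (intro mult_left_mono) auto
          then have "B * ln (real r) \<le> be * ta / 8" using B1 by linarith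
          then have "B * ln (real r) * sqrt (real N) \<le> be * ta / 8 * sqrt (real N)" using sqN by (intro mult_right_mono) auto
          then show ?thesis by (simp add: mult_ac)
        qed
        also have "\<dots> \<le> real r * c - B * sqrt (real N) * ln (real r)" using c0 by simp
        finally have "xor_prob s N r \<le> exp (real r * c - B * sqrt (real N) * ln (real r))"
          using G by (meson exp_le_cancel_iff order_trans)
        then show ?thesis using rhs by linarith
      next
        case False
        then have rm0: "m0 \<le> r" by simp
        define m1 where "m1 = nat \<lfloor>real N powr (1/8)\<rfloor>"
        have m1a: "real m1 \<le> real N powr (1/8)" unfolding m1_def by (simp add: floor_le_iff)
        have m1b: "real N powr (1/8) - 1 \<le> real m1" unfolding m1_def by linarith
        have m1m0: "m0 \<le> m1" using m1b P by linarith
        define m where "m = min r m1"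
        have m: "m0 \<le> m" "m \<le> r" "m \<le> m1" unfolding m_def using rm0 m1m0 by auto
        have m2: "2 \<le> m" "m \<le> N" using m m03 rN by auto
        have G: "xor_prob s N r \<le> exp (real m * ln 4 + real m * M * la / sqrt (real N) + 9 / 8 * sqrt (real N) + 1 / 8
           - ln (real m) * sqrt (real N) / (16 * la))"
          using case_G2[OF s N x up mainb m2(1) m(2) m2(2)] unfolding la_def by simp
        have mpos: "0 < real m" using m2 by simp
        have lnm: "36 * la \<le> ln (real m)"
        proof -
          have "ln (real m0) \<le> ln (real m)" using m(1) m03 by simp
          then show ?thesis using lnm0 by linarith
        qed
        have lnm1: "1 \<le> ln (real m)" using lnm la1 by linarith
        have e1: "real m * M * la / sqrt (real N) = real m * (K * la) * sqrt (sqrt (real N))"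
        proof -
          have "real m * M * la / sqrt (real N) = real m * la * (M / sqrt (real N))" by simp
          then show ?thesis unfolding MfN by (simp add: mult_ac)
        qed
        have t1: "real m * ln 4 + real m * (K * la) * sqrt (sqrt (real N)) \<le> ln (real m) * sqrt (real N) / (64 * la)"
        proof -
          have "real m \<le> real N powr (1/8)" using m(3) m1a by linarith
          then have "real m * (K * la * sqrt (sqrt (real N)) + ln 4) \<le> real N powr (1/8) * (K * la * sqrt (sqrt (real N)) + ln 4)"
            using K0 la1 by (intro mult_right_mono) auto
          also have "\<dots> \<le> sqrt (real N) / (64 * la)" using P by simp
          also have "\<dots> \<le> ln (real m) * sqrt (real N) / (64 * la)"
            using lnm1 sqN la1 by (intro divide_right_mono) (auto simp: mult_le_cancel_right1)
          finally show ?thesis by (simp add: algebra_simps)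
        qed
        have t2: "9 / 8 * sqrt (real N) \<le> ln (real m) * sqrt (real N) / (32 * la)"
        proof -
          have "9 / 8 \<le> ln (real m) / (32 * la)" using lnm la1 by (simp add: field_simps)
          then have "9 / 8 * sqrt (real N) \<le> ln (real m) / (32 * la) * sqrt (real N)" using sqN by (intro mult_right_mono) auto
          then show ?thesis by simp
        qed
        have lnmr: "ln (real r) / 16 \<le> ln (real m)"
        proof (cases "m = r")
          case True then show ?thesis using lnr0 by simp
        next
          case False
          then have mm1: "m = m1" unfolding m_def by auto
          have "real N powr (1/16) \<le> real m" using mm1 m1b P by linarith
          then have "ln (real N powr (1/16)) \<le> ln (real m)" using N mpos by (subst ln_le_cancel_iff) auto
          moreover have "ln (real N powr (1/16)) = ln (real N) / 16" using N by (simp add: ln_powr)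
          moreover have "ln (real r) \<le> ln (real N)" using rN r by simp
          ultimately show ?thesis by linarith
        qed
        have t3: "ln (real r) * sqrt (real N) / (1024 * la) \<le> ln (real m) * sqrt (real N) / (64 * la)"
        proof -
          have "ln (real r) / (1024 * la) \<le> ln (real m) / (64 * la)" using lnmr la1 by (simp add: field_simps)
          then have "ln (real r) / (1024 * la) * sqrt (real N) \<le> ln (real m) / (64 * la) * sqrt (real N)"
            using sqN by (intro mult_right_mono) auto
          then show ?thesis by simp
        qed
        have t4: "B * sqrt (real N) * ln (real r) \<le> ln (real r) * sqrt (real N) / (1024 * la)"
        proof -
          have "B * (sqrt (real N) * ln (real r)) \<le> 1 / (1024 * la) * (sqrt (real N) * ln (real r))"
            using B2 sqN lnr0 by (intro mult_right_mono) auto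
          then show ?thesis by (simp add: mult_ac)
        qed
        have split: "ln (real m) * sqrt (real N) / (16 * la) = ln (real m) * sqrt (real N) / (64 * la) + ln (real m) * sqrt (real N) / (32 * la) + ln (real m) * sqrt (real N) / (64 * la)"
          by (simp add: field_simps)
        have "real m * ln 4 + real m * M * la / sqrt (real N) + 9 / 8 * sqrt (real N) + 1 / 8 - ln (real m) * sqrt (real N) / (16 * la)
            \<le> 1/8 - B * sqrt (real N) * ln (real r)"
          using t1 t2 t3 t4 split unfolding e1 by linarith
        also have "\<dots> \<le> real r * c - B * sqrt (real N) * ln (real r)"
        proof -
          have "1/8 \<le> c" unfolding c_def using B0 by simp
          also have "c \<le> real r * c" using c0 r by (simp add: mult_le_cancel_right1)
          finally show ?thesis by simp
        qed
        finally have "xor_prob s N r \<le> exp (real r * c - B * sqrt (real N) * ln (real r))"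
          using G by (meson exp_le_cancel_iff order_trans)
        then show ?thesis using rhs by linarith
      qed
    qed
  qed
  show ?thesis
    by (intro exI[of _ A] exI[of _ B] conjI allI impI) (use B0 main in \<open>auto simp: A_def\<close>)
qed


theorem lemma5:
  fixes s :: nat
  assumes "s \<ge> 1"
  shows "\<exists>A B :: real. A > 0 \<and> B > 0 \<and>
           (\<forall>N r :: nat. N \<ge> 1 \<longrightarrow> r \<ge> 2 \<longrightarrow>
              xor_prob s N r \<le> A ^ r * real N powr (real r / 4) * real r powr (- B * sqrt (real N)))"
  using lemma5_core[OF assms] .

end
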